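(* Let $\alpha\in(0,1)$. Suppose $\tau_1=\cdots=\tau_K=\tau_0$ where $\mathbb P(\tau_0=m)=\theta(1-\theta)^m$, $m=0,1,\dots$, $\theta\in(0,1)$, and conditionally on $\tau_0$ the observations $X_{k,t}$ are independent with density $p$ if $t\le\tau_0$ and $q$ if $t>\tau_0$; assume Assumption A2. Let $W_t=\mathbb P(\tau_0<t\mid X_{k,s},1\le k\le K,1\le s\le t)$ and $T=\min\{t:W_t>\alpha\}$. Then the proposed procedure satisfies $\mathbb T^*_K=(T,\dots,T)$. Moreover, with all $K$ defined on one probability space (an infinite family of streams sharing $\tau_0$), for each $t\ge1$: (1) $\lim_{K\to\infty}(T-\tau_0)=1$ a.s.; (2) $\lim_{K\to\infty}\mathrm{LFNR}_{t+1}(\mathbb T^*_K)=0$ a.s.; (3) $\lim_{K\to\infty}K^{-1}|S^*_{K,t+1}|=\mathbf 1(\tau_0\ge t)$ a.s.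
   Context: Assumption A2: for $Z_1\sim p$ and $Z_2\sim q$, $\mathbb E\log\frac{p(Z_1)}{q(Z_1)}>0$, $\mathbb E\log\frac{q(Z_2)}{p(Z_2)}>0$, $\mathbb E\big(\log\frac{p(Z_1)}{q(Z_1)}\big)^2<\infty$ and $\mathbb E\big(\log\frac{q(Z_2)}{p(Z_2)}\big)^2<\infty$. A compound sequential detection procedure for $K$ streams consists of index sets $S_1=\{1,\dots,K\}\supseteq S_2\supseteq\cdots$ and a filtration defined inductively by $\mathcal F_1=\sigma(X_{k,1}:1\le k\le K)$ and $\mathcal F_t=\sigma(\mathcal F_{t-1},S_t,X_{k,t}:k\in S_t)$, where $S_t$ is $\mathcal F_{t-1}$-measurable; equivalently $\mathbb T=(T_1,\dots,T_K)$ with $T_k=\sup\{t:k\in S_t\}$. For $t\ge1$, $\mathrm{FNP}_{t+1}=\sum_{k\in S_{t+1}}\mathbf 1(\tau_k<t)/(|S_{t+1}|\vee1)$ and $\mathrm{LFNR}_{t+1}=\mathbb E(\mathrm{FNP}_{t+1}\mid\mathcal F_t)$. Posteriors: $W_{k,t}=\mathbb P(\tau_k<t\mid\mathcal F_t)$. One-step update rule: given $\alpha$, $S_t$ and $(W_{k,t})_{k\in S_t}$, write $S_t=\{k_1,\dots,k_m\}$ ordered so that $W_{k_1,t}\le\cdots\le W_{k_m,t}$, ties broken by increasing index; set $R_0=0$, $R_n=\frac1n\sum_{i=1}^nW_{k_i,t}$; let $n$ be the largest element of $\{0,\dots,m\}$ with $R_n\le\alpha$; output $S_{t+1}=\{k_1,\dots,k_n\}$.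 The proposed procedure $\mathbb T^*_K$ (with active sets $S^*_{K,t}$): $S_1=\{1,\dots,K\}$ and for each $t\ge1$, $S_{t+1}$ is the output of the one-step rule applied to $S_t$ and its current posteriors. *)

theory Defs
  imports "HOL-Probability.Probability"
begin

text \<open>One-step update rule: sort the active set by posterior with a stable sort applied to the index-sorted list (so ties are broken by increasing index), let R n be the
  mean of the n smallest posteriors (R 0 = 0 since x / 0 = 0), keep the largest
  prefix with R n below alpha.\<close>
definition onestep :: "real \<Rightarrow> nat set \<Rightarrow> (nat \<Rightarrow> real) \<Rightarrow> nat set" where
  "onestep \<alpha> S W =
     (let ks = sort_key W (sorted_list_of_set S);
          R = (\<lambda>n. (\<Sum>i<n. W (ks ! i)) / real n);
          n = (GREATEST n. n \<le> length ks \<and> R n \<le> \<alpha>)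
      in set (take n ks))"

definition obs_gens :: "'a measure \<Rightarrow> 'b measure \<Rightarrow> (nat \<Rightarrow> nat \<Rightarrow> 'a \<Rightarrow> 'b)
    \<Rightarrow> ('a \<Rightarrow> nat set) \<Rightarrow> nat \<Rightarrow> 'a set set" where
  "obs_gens M N X S t =
     {{\<omega> \<in> space M. S \<omega> = s} | s. True} \<union>
     {{\<omega> \<in> space M. k \<in> S \<omega> \<and> X k t \<omega> \<in> B} | k B. B \<in> sets N}"

text \<open>proc_SF M N X tau alpha K n = (S_{n+1}, F_{n+1}) of the proposed procedure for
  K streams; tau k is the change point of stream k.\<close>
fun proc_SF :: "'a measure \<Rightarrow> 'b measure \<Rightarrow> (nat \<Rightarrow> nat \<Rightarrow> 'a \<Rightarrow> 'b) \<Rightarrow> (nat \<Rightarrow> 'a \<Rightarrow> nat)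
    \<Rightarrow> real \<Rightarrow> nat \<Rightarrow> nat \<Rightarrow> ('a \<Rightarrow> nat set) \<times> 'a measure" where
  "proc_SF M N X \<tau> \<alpha> K 0 =
     ((\<lambda>\<omega>. {1..K}), sigma (space M) (obs_gens M N X (\<lambda>\<omega>. {1..K}) 1))"
| "proc_SF M N X \<tau> \<alpha> K (Suc n) =
     (let SF = proc_SF M N X \<tau> \<alpha> K n; S = fst SF; F = snd SF;
          S' = (\<lambda>\<omega>. onestep \<alpha> (S \<omega>)
                  (\<lambda>k. real_cond_exp M F (indicator {x \<in> space M. \<tau> k x < Suc n}) \<omega>))
      in (S', sigma (space M) (sets F \<union> obs_gens M N X S' (Suc (Suc n)))))"

definition proc_S :: "'a measure \<Rightarrow> 'b measure \<Rightarrow> (nat \<Rightarrow> nat \<Rightarrow> 'a \<Rightarrow> 'b) \<Rightarrow> (nat \<Rightarrow> 'a \<Rightarrow> nat)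
    \<Rightarrow> real \<Rightarrow> nat \<Rightarrow> nat \<Rightarrow> 'a \<Rightarrow> nat set" where
  "proc_S M N X \<tau> \<alpha> K t = fst (proc_SF M N X \<tau> \<alpha> K (t - 1))"

definition proc_F :: "'a measure \<Rightarrow> 'b measure \<Rightarrow> (nat \<Rightarrow> nat \<Rightarrow> 'a \<Rightarrow> 'b) \<Rightarrow> (nat \<Rightarrow> 'a \<Rightarrow> nat)
    \<Rightarrow> real \<Rightarrow> nat \<Rightarrow> nat \<Rightarrow> 'a measure" where
  "proc_F M N X \<tau> \<alpha> K t = snd (proc_SF M N X \<tau> \<alpha> K (t - 1))"

definition proc_T :: "'a measure \<Rightarrow> 'b measure \<Rightarrow> (nat \<Rightarrow> nat \<Rightarrow> 'a \<Rightarrow> 'b) \<Rightarrow> (nat \<Rightarrow> 'a \<Rightarrow> nat)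
    \<Rightarrow> real \<Rightarrow> nat \<Rightarrow> nat \<Rightarrow> 'a \<Rightarrow> enat" where
  "proc_T M N X \<tau> \<alpha> K k \<omega> = (SUP t \<in> {t. 1 \<le> t \<and> k \<in> proc_S M N X \<tau> \<alpha> K t \<omega>}. enat t)"

definition proc_FNP_next :: "'a measure \<Rightarrow> 'b measure \<Rightarrow> (nat \<Rightarrow> nat \<Rightarrow> 'a \<Rightarrow> 'b) \<Rightarrow> (nat \<Rightarrow> 'a \<Rightarrow> nat)
    \<Rightarrow> real \<Rightarrow> nat \<Rightarrow> nat \<Rightarrow> 'a \<Rightarrow> real" where
  "proc_FNP_next M N X \<tau> \<alpha> K t \<omega> =
     (\<Sum>k \<in> proc_S M N X \<tau> \<alpha> K (t + 1) \<omega>. if \<tau> k \<omega> < t then 1 else 0)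
       / real (max (card (proc_S M N X \<tau> \<alpha> K (t + 1) \<omega>)) 1)"

definition proc_LFNR_next :: "'a measure \<Rightarrow> 'b measure \<Rightarrow> (nat \<Rightarrow> nat \<Rightarrow> 'a \<Rightarrow> 'b) \<Rightarrow> (nat \<Rightarrow> 'a \<Rightarrow> nat)
    \<Rightarrow> real \<Rightarrow> nat \<Rightarrow> nat \<Rightarrow> 'a \<Rightarrow> real" where
  "proc_LFNR_next M N X \<tau> \<alpha> K t =
     real_cond_exp M (proc_F M N X \<tau> \<alpha> K t) (proc_FNP_next M N X \<tau> \<alpha> K t)"

definition obs_full :: "'a measure \<Rightarrow> 'b measure \<Rightarrow> (nat \<Rightarrow> nat \<Rightarrow> 'a \<Rightarrow> 'b) \<Rightarrow> nat \<Rightarrow> nat \<Rightarrow> 'a measure" where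
  "obs_full M N X K t = sigma (space M)
     {X k s -` B \<inter> space M | k s B. 1 \<le> k \<and> k \<le> K \<and> 1 \<le> s \<and> s \<le> t \<and> B \<in> sets N}"

definition post_W :: "'a measure \<Rightarrow> 'b measure \<Rightarrow> (nat \<Rightarrow> nat \<Rightarrow> 'a \<Rightarrow> 'b) \<Rightarrow> ('a \<Rightarrow> nat)
    \<Rightarrow> nat \<Rightarrow> nat \<Rightarrow> 'a \<Rightarrow> real" where
  "post_W M N X tau0 K t = real_cond_exp M (obs_full M N X K t) (indicator {\<omega> \<in> space M. tau0 \<omega> < t})"

definition stop_T :: "'a measure \<Rightarrow> 'b measure \<Rightarrow> (nat \<Rightarrow> nat \<Rightarrow> 'a \<Rightarrow> 'b) \<Rightarrow> ('a \<Rightarrow> nat)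
    \<Rightarrow> real \<Rightarrow> nat \<Rightarrow> 'a \<Rightarrow> enat" where
  "stop_T M N X tau0 \<alpha> K \<omega> =
     (if \<exists>t \<ge> 1. post_W M N X tau0 K t \<omega> > \<alpha>
      then enat (LEAST t. 1 \<le> t \<and> post_W M N X tau0 K t \<omega> > \<alpha>) else \<infinity>)"

end

theory Submission
  imports Defs
begin


lemma onestep_const:
  assumes "finite S" "0 \<le> \<alpha>"
  shows "onestep \<alpha> S (\<lambda>k. w) = (if w \<le> \<alpha> then S else {})"
proof -
  define ks where "ks = sort_key (\<lambda>k. w) (sorted_list_of_set S)"
  have R: "(\<Sum>i<n. (\<lambda>k. w) (ks ! i)) / real n = (if n = 0 then 0 else w)" for n
    by simp
  have sks: "set ks = S" using assms by (simp add: ks_def)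
  show ?thesis
  proof (cases "w \<le> \<alpha>")
    case True
    have "(GREATEST n. n \<le> length ks \<and> (\<Sum>i<n. (\<lambda>k. w) (ks ! i)) / real n \<le> \<alpha>) = length ks"
      by (rule Greatest_equality) (use True assms in \<open>auto simp: R\<close>)
    then show ?thesis using True sks unfolding onestep_def Let_def ks_def[symmetric] by simp
  next
    case False
    have "(GREATEST n. n \<le> length ks \<and> (\<Sum>i<n. (\<lambda>k. w) (ks ! i)) / real n \<le> \<alpha>) = 0"
      by (rule Greatest_equality) (use False assms in \<open>auto simp: R split: if_splits\<close>)
    then show ?thesis using False sks unfolding onestep_def Let_def ks_def[symmetric] by simp
  qed
qed




lemma sfs_of_prob: "prob_space M \<Longrightarrow> subalgebra M F \<Longrightarrow> sigma_finite_subalgebra M F"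
  by (rule finite_measure_subalgebra_is_sigma_finite)
     (simp add: finite_measure_subalgebra_def finite_measure_subalgebra_axioms_def prob_space_def)

lemma indicator_mult_meas:
  assumes g: "g \<in> borel_measurable G" and A: "A \<in> sets F"
    and tr: "\<forall>B\<in>sets G. B \<inter> A \<in> sets F" and sp: "space F = space G"
  shows "(\<lambda>x. indicator A x * g x :: real) \<in> borel_measurable F"
proof (rule measurableI)
  fix x assume "x \<in> space F" then show "indicator A x * g x \<in> space borel" by simp
next
  fix U :: "real set" assume U: "U \<in> sets borel"
  have A_sub: "A \<subseteq> space F" using A sets.sets_into_space by blast
  have "(\<lambda>x. indicator A x * g x) -` U \<inter> space F =
      ((g -` U \<inter> space G) \<inter> A) \<union> (if 0 \<in> U then space F - A else {})"
    using A_sub sp by (auto simp: indicator_def of_bool_def split: if_splits)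
  moreover have "(g -` U \<inter> space G) \<inter> A \<in> sets F"
    using tr measurable_sets[OF g U] by blast
  moreover have "(if 0 \<in> U then space F - A else {}) \<in> sets F" using A by auto
  ultimately show "(\<lambda>x. indicator A x * g x) -` U \<inter> space F \<in> sets F" by auto
qed

lemma cexp_trace:
  assumes P: "prob_space M" and MG: "subalgebra M G" and GF: "subalgebra G F"
    and A: "A \<in> sets F" and tr: "\<forall>B\<in>sets G. B \<inter> A \<in> sets F"
    and f: "integrable M f"
  shows "AE x in M. x \<in> A \<longrightarrow> real_cond_exp M F f x = real_cond_exp M G f x"
proof -
  have MF: "subalgebra M F" using MG GF by (auto simp: subalgebra_def)
  interpret G: sigma_finite_subalgebra M G using sfs_of_prob[OF P MG] .
  interpret F: sigma_finite_subalgebra M F using sfs_of_prob[OF P MF] .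
  interpret prob_space M by fact
  have fm[measurable]: "f \<in> borel_measurable M" using f by auto
  have AM: "A \<in> sets M" using A MF by (auto simp: subalgebra_def)
  have AG: "A \<in> sets G" using A GF by (auto simp: subalgebra_def)
  define g where "g = real_cond_exp M G f"
  define h where "h = (\<lambda>x. indicator A x * g x)"
  have gG: "g \<in> borel_measurable G" unfolding g_def by simp
  have gM[measurable]: "g \<in> borel_measurable M" unfolding g_def by simp
  have gi: "integrable M g" unfolding g_def using G.real_cond_exp_int(1)[OF f] .
  have hF: "h \<in> borel_measurable F" unfolding h_def
    by (rule indicator_mult_meas[OF gG A tr]) (use GF in \<open>auto simp: subalgebra_def\<close>)
  have hM[measurable]: "h \<in> borel_measurable M" using hF MF measurable_from_subalg by blast
  have hi: "integrable M h" unfolding h_def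
    using integrable_real_mult_indicator[OF AM gi] by (simp add: mult.commute)
  have iAF: "indicator A \<in> borel_measurable F" using A by simp
  have iAG: "indicator A \<in> borel_measurable G" using AG by simp
  have iAf: "integrable M (\<lambda>x. indicator A x * f x)"
    using integrable_real_mult_indicator[OF AM f] by (simp add: mult.commute)
  have e1: "AE x in M. real_cond_exp M F (\<lambda>x. indicator A x * f x) x = indicator A x * real_cond_exp M F f x"
    by (rule F.real_cond_exp_mult[OF iAF fm iAf])
  have e2: "AE x in M. real_cond_exp M G (\<lambda>x. indicator A x * f x) x = h x"
    unfolding h_def g_def by (rule G.real_cond_exp_mult[OF iAG fm iAf])
  have e3: "AE x in M. real_cond_exp M F (real_cond_exp M G (\<lambda>x. indicator A x * f x)) x
               = real_cond_exp M F (\<lambda>x. indicator A x * f x) x"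
    by (rule F.real_cond_exp_nested_subalg[OF MG GF iAf])
  have e4: "AE x in M. real_cond_exp M F (real_cond_exp M G (\<lambda>x. indicator A x * f x)) x
               = real_cond_exp M F h x"
    by (rule F.real_cond_exp_cong[OF e2]) auto
  have e5: "AE x in M. real_cond_exp M F h x = h x"
    by (rule F.real_cond_exp_F_meas[OF hi hF])
  show ?thesis using e1 e3 e4 e5
    by eventually_elim (auto simp: h_def g_def indicator_def)
qed




lemma l2_opt:
  assumes P: "prob_space M" and MG: "subalgebra M G" and E: "E \<in> sets M"
    and Z: "Z \<in> borel_measurable G" and Zb: "\<And>x. 0 \<le> Z x" "\<And>x. Z x \<le> 1"
  shows "(\<integral>x. (indicator E x - real_cond_exp M G (indicator E) x)\<^sup>2 \<partial>M)
           \<le> (\<integral>x. (indicator E x - Z x)\<^sup>2 \<partial>M)"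
proof -
  interpret G: sigma_finite_subalgebra M G using sfs_of_prob[OF P MG] .
  interpret prob_space M by fact
  define f :: "'a \<Rightarrow> real" where "f = indicator E"
  define W where "W = real_cond_exp M G f"
  have fm[measurable]: "f \<in> borel_measurable M" using E unfolding f_def by simp
  have fi: "integrable M f" unfolding f_def using E
    by (intro integrable_const_bound[of _ 1]) (auto simp: indicator_def)
  have ZM[measurable]: "Z \<in> borel_measurable M" using Z MG measurable_from_subalg by blast
  have WG: "W \<in> borel_measurable G" unfolding W_def by simp
  have WM[measurable]: "W \<in> borel_measurable M" unfolding W_def by simp
  have W0: "AE x in M. W x \<ge> 0" unfolding W_def
    by (rule G.real_cond_exp_ge_c[OF fi]) (simp add: f_def)
  have W1: "AE x in M. W x \<le> 1" unfolding W_def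
    by (rule G.real_cond_exp_le_c[OF fi]) (simp add: f_def indicator_def)
  define d where "d = (\<lambda>x. W x - Z x)"
  have dG: "d \<in> borel_measurable G" unfolding d_def using WG Z by simp
  have dM[measurable]: "d \<in> borel_measurable M" unfolding d_def by simp
  have bnd: "AE x in M. \<bar>W x\<bar> \<le> 1 \<and> \<bar>d x\<bar> \<le> 1 \<and> \<bar>f x\<bar> \<le> 1"
    using W0 W1 proof eventually_elim
    case (elim x) then show ?case using Zb[of x] by (auto simp: d_def f_def indicator_def abs_le_iff)
  qed
  have int: "integrable M g" if "g \<in> borel_measurable M" "AE x in M. \<bar>g x\<bar> \<le> 4" for g :: "'a \<Rightarrow> real"
    using integrable_const_bound[of g 4] that by simp
  have b4: "\<bar>a\<bar> \<le> 1 \<Longrightarrow> \<bar>b\<bar> \<le> 1 \<Longrightarrow> \<bar>a * b\<bar> \<le> 4" for a b :: real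
    by (metis abs_mult dual_order.trans mult_le_one abs_ge_zero numeral_le_one_iff
        one_le_numeral semiring_norm(69))
  have b4': "\<bar>a\<bar> \<le> 1 \<Longrightarrow> \<bar>b\<bar> \<le> 1 \<Longrightarrow> (a - b)\<^sup>2 \<le> 4" for a b :: real
  proof -
    assume "\<bar>a\<bar> \<le> 1" "\<bar>b\<bar> \<le> 1"
    then have "\<bar>a - b\<bar> \<le> 2" by linarith
    then have "\<bar>a - b\<bar>\<^sup>2 \<le> 2\<^sup>2" by (intro power_mono) auto
    then show ?thesis by simp
  qed
  have i1: "integrable M (\<lambda>x. d x * f x)"
  proof (rule int)
    show "AE x in M. \<bar>d x * f x\<bar> \<le> 4" using bnd by eventually_elim (auto intro: b4)
  qed simp
  have key: "(\<integral>x. d x * W x \<partial>M) = (\<integral>x. d x * f x \<partial>M)"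
    unfolding W_def by (rule G.real_cond_exp_intg(2)[OF i1 dG fm])
  have eq: "(\<lambda>x. (f x - Z x)\<^sup>2) = (\<lambda>x. (f x - W x)\<^sup>2 + ((d x)\<^sup>2 + 2 * (d x * f x - d x * W x)))"
    by (auto simp: d_def power2_eq_square algebra_simps)
  have ia: "integrable M (\<lambda>x. (f x - W x)\<^sup>2)"
  proof (rule int)
    show "AE x in M. \<bar>(f x - W x)\<^sup>2\<bar> \<le> 4" using bnd by eventually_elim (simp add: b4')
  qed simp
  have ib: "integrable M (\<lambda>x. (d x)\<^sup>2)"
  proof (rule int)
    show "AE x in M. \<bar>(d x)\<^sup>2\<bar> \<le> 4" using bnd by eventually_elim (metis abs_power2 b4 power2_eq_square)
  qed simp
  have ic: "integrable M (\<lambda>x. d x * W x)"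
  proof (rule int)
    show "AE x in M. \<bar>d x * W x\<bar> \<le> 4" using bnd by eventually_elim (auto intro: b4)
  qed simp
  have "(\<integral>x. (f x - Z x)\<^sup>2 \<partial>M) = (\<integral>x. (f x - W x)\<^sup>2 \<partial>M) + ((\<integral>x. (d x)\<^sup>2 \<partial>M) + 2 * ((\<integral>x. d x * f x \<partial>M) - (\<integral>x. d x * W x \<partial>M)))"
    unfolding eq using ia ib ic i1 by (simp add: integral_add integral_diff integral_mult_right)
  also have "\<dots> = (\<integral>x. (f x - W x)\<^sup>2 \<partial>M) + (\<integral>x. (d x)\<^sup>2 \<partial>M)" using key by simp
  also have "\<dots> \<ge> (\<integral>x. (f x - W x)\<^sup>2 \<partial>M)" by (simp add: integral_nonneg)
  finally show ?thesis unfolding f_def W_def by simp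
qed

lemma ae_conv_summable:
  fixes f :: "'a \<Rightarrow> real" and W :: "nat \<Rightarrow> 'a \<Rightarrow> real"
  assumes P: "prob_space M" and fm: "f \<in> borel_measurable M" and Wm: "\<And>K. W K \<in> borel_measurable M"
    and ii: "\<And>K. integrable M (\<lambda>x. (f x - W K x)\<^sup>2)"
    and le: "\<And>K. (\<integral>x. (f x - W K x)\<^sup>2 \<partial>M) \<le> c K" and c: "summable c"
  shows "AE x in M. (\<lambda>K. W K x) \<longlonglongrightarrow> f x"
proof -
  have c0: "0 \<le> c K" for K
  proof -
    have "0 \<le> (\<integral>x. (f x - W K x)\<^sup>2 \<partial>M)" by simp
    then show ?thesis using le[of K] by linarith
  qed
  have meas: "(\<lambda>x. ennreal ((f x - W K x)\<^sup>2)) \<in> borel_measurable M" for K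
    using fm Wm[of K] by measurable
  have "(\<integral>\<^sup>+ x. (\<Sum>K. ennreal ((f x - W K x)\<^sup>2)) \<partial>M) = (\<Sum>K. \<integral>\<^sup>+ x. ennreal ((f x - W K x)\<^sup>2) \<partial>M)"
    by (rule nn_integral_suminf[OF meas])
  also have "\<dots> = (\<Sum>K. ennreal (\<integral>x. (f x - W K x)\<^sup>2 \<partial>M))"
    by (intro suminf_cong nn_integral_eq_integral ii) auto
  also have "\<dots> \<le> (\<Sum>K. ennreal (c K))"
    by (intro suminf_le) (auto intro: le ennreal_leI)
  also have "\<dots> < top" using ennreal_suminf_neq_top[OF c c0] by (simp add: top.not_eq_extremum)
  finally have fin: "(\<integral>\<^sup>+ x. (\<Sum>K. ennreal ((f x - W K x)\<^sup>2)) \<partial>M) \<noteq> \<infinity>" by simp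
  have "AE x in M. (\<Sum>K. ennreal ((f x - W K x)\<^sup>2)) \<noteq> \<infinity>"
    by (rule nn_integral_PInf_AE[OF _ fin]) (use meas in measurable)
  then show ?thesis
  proof eventually_elim
    case (elim x)
    have "summable (\<lambda>K. (f x - W K x)\<^sup>2)"
      by (rule summable_suminf_not_top) (use elim in auto)
    then have "(\<lambda>K. (f x - W K x)\<^sup>2) \<longlonglongrightarrow> 0" by (rule summable_LIMSEQ_zero)
    then have "(\<lambda>K. sqrt ((f x - W K x)\<^sup>2)) \<longlonglongrightarrow> sqrt 0" by (intro tendsto_intros)
    then have "(\<lambda>K. \<bar>f x - W K x\<bar>) \<longlonglongrightarrow> 0" by simp
    then have "(\<lambda>K. f x - W K x) \<longlonglongrightarrow> 0" by (simp add: tendsto_rabs_zero_iff)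
    then have "(\<lambda>K. f x - (f x - W K x)) \<longlonglongrightarrow> f x - 0" by (intro tendsto_intros)
    then show ?case by simp
  qed
qed




context
  fixes M :: "'a measure" and N :: "'b measure" and X :: "nat \<Rightarrow> nat \<Rightarrow> 'a \<Rightarrow> 'b"
    and tau0 :: "'a \<Rightarrow> nat" and \<alpha> :: real and K :: nat
  assumes Xm: "\<And>k t. X k t \<in> measurable M N" and a0: "0 \<le> \<alpha>"
begin

definition "Gf t = {X k s -` B \<inter> space M | k s B. 1 \<le> k \<and> k \<le> K \<and> 1 \<le> s \<and> s \<le> t \<and> B \<in> sets N}"

lemma sig_sub: "A \<subseteq> sets Q \<Longrightarrow> space Q = \<Omega> \<Longrightarrow> sigma_sets \<Omega> A \<subseteq> sets Q"
  using sets.sigma_sets_subset by metis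

lemma Gf_Pow: "Gf t \<subseteq> Pow (space M)" unfolding Gf_def by auto

lemma obs_full_sets: "sets (obs_full M N X K t) = sigma_sets (space M) (Gf t)"
  unfolding obs_full_def Gf_def[symmetric] by (rule sets_measure_of[OF Gf_Pow])

lemma obs_full_space: "space (obs_full M N X K t) = space M"
  unfolding obs_full_def by (simp add: space_measure_of_conv)

lemma Gf_in: "1 \<le> k \<Longrightarrow> k \<le> K \<Longrightarrow> 1 \<le> s \<Longrightarrow> s \<le> t \<Longrightarrow> B \<in> sets N \<Longrightarrow>
   X k s -` B \<inter> space M \<in> sets (obs_full M N X K t)"
  unfolding obs_full_sets Gf_def by (rule sigma_sets.Basic) blast

lemma Gf_sets: "Gf t \<subseteq> sets M"
  unfolding Gf_def using Xm measurable_sets by blast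

lemma obs_full_subM: "sets (obs_full M N X K t) \<subseteq> sets M"
  unfolding obs_full_sets using sets.sigma_sets_subset[OF Gf_sets] by simp

lemma obs_full_mono: "t \<le> t' \<Longrightarrow> sets (obs_full M N X K t) \<subseteq> sets (obs_full M N X K t')"
  unfolding obs_full_sets Gf_def by (rule sigma_sets_subseteq) (use order_trans in blast)

lemma subalg_obs_full: "subalgebra M (obs_full M N X K t)"
  using obs_full_subM obs_full_space by (auto simp: subalgebra_def)

abbreviation "SFa n \<equiv> proc_SF M N X (\<lambda>_. tau0) \<alpha> K n"
abbreviation "Sa n \<equiv> fst (SFa n)"
abbreviation "Fa n \<equiv> snd (SFa n)"
abbreviation "Wa n \<equiv> real_cond_exp M (Fa n) (indicator {x \<in> space M. tau0 x < Suc n})"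

lemma obs_gens_Pow: "obs_gens M N X S t \<subseteq> Pow (space M)"
  unfolding obs_gens_def by auto

lemma SF_Suc_S: "Sa (Suc n) = (\<lambda>\<omega>. onestep \<alpha> (Sa n \<omega>) (\<lambda>k. Wa n \<omega>))"
  by (simp add: Let_def)

lemma SF_Suc_F: "Fa (Suc n) = sigma (space M) (sets (Fa n) \<union> obs_gens M N X (Sa (Suc n)) (Suc (Suc n)))"
  by (simp add: Let_def)

definition "Inv n \<longleftrightarrow>
   (\<forall>\<omega>. Sa n \<omega> = {1..K} \<or> Sa n \<omega> = {}) \<and>
   space (Fa n) = space M \<and>
   sets (Fa n) \<subseteq> sets (obs_full M N X K (Suc n)) \<and>
   (\<forall>s. {\<omega> \<in> space M. Sa n \<omega> = s} \<in> sets (Fa n)) \<and>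
   (\<forall>B \<in> sets (obs_full M N X K (Suc n)). B \<inter> {\<omega> \<in> space M. Sa n \<omega> = {1..K}} \<in> sets (Fa n))"

lemma Inv0: "Inv 0"
proof -
  let ?G = "obs_gens M N X (\<lambda>\<omega>. {1..K}) 1"
  have F0: "Fa 0 = sigma (space M) ?G" by simp
  have sF0: "sets (Fa 0) = sigma_sets (space M) ?G"
    unfolding F0 by (rule sets_measure_of[OF obs_gens_Pow])
  have spF0: "space (Fa 0) = space M" unfolding F0 by (simp add: space_measure_of_conv)
  have c: "sets (Fa 0) \<subseteq> sets (obs_full M N X K 1)"
    unfolding sF0
  proof (rule sig_sub)
    show "?G \<subseteq> sets (obs_full M N X K 1)"
    proof
      fix A assume "A \<in> ?G"
      then consider s where "A = {\<omega> \<in> space M. {1..K} = s}"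
        | k B where "A = {\<omega> \<in> space M. k \<in> {1..K} \<and> X k 1 \<omega> \<in> B}" "B \<in> sets N"
        unfolding obs_gens_def by blast
      then show "A \<in> sets (obs_full M N X K 1)"
      proof cases
        case 1 then show ?thesis
        proof (cases "{1..K} = s")
          case True
          then have "A = space (obs_full M N X K 1)" using 1 by (simp add: obs_full_space)
          then show ?thesis by simp
        next
          case False
          then have "A = {}" using 1 by simp
          then show ?thesis by simp
        qed
      next
        case (2 k B)
        show ?thesis
        proof (cases "k \<in> {1..K}")
          case True
          then have "A = X k 1 -` B \<inter> space M" using 2 by auto
          moreover have "X k 1 -` B \<inter> space M \<in> sets (obs_full M N X K 1)"
            using Gf_in[of k 1 1 B] True 2(2) by simp
          ultimately show ?thesis by simp
        next
          case False then have "A = {}" using 2(1) by fastforce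
          then show ?thesis by simp
        qed
      qed
    qed
  qed (simp add: obs_full_space)
  have d: "\<forall>s. {\<omega> \<in> space M. Sa 0 \<omega> = s} \<in> sets (Fa 0)"
  proof
    fix s
    have "{\<omega> \<in> space M. Sa 0 \<omega> = s} \<in> ?G" unfolding obs_gens_def by auto
    then show "{\<omega> \<in> space M. Sa 0 \<omega> = s} \<in> sets (Fa 0)" unfolding sF0 by (rule sigma_sets.Basic)
  qed
  have e0: "sets (obs_full M N X K 1) \<subseteq> sets (Fa 0)"
    unfolding obs_full_sets
  proof (rule sig_sub)
    show "Gf 1 \<subseteq> sets (Fa 0)"
    proof
      fix A assume "A \<in> Gf 1"
      then obtain k s B where A: "A = X k s -` B \<inter> space M" "1 \<le> k" "k \<le> K" "1 \<le> s" "s \<le> 1" "B \<in> sets N"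
        unfolding Gf_def by blast
      then have "A = {\<omega> \<in> space M. k \<in> {1..K} \<and> X k 1 \<omega> \<in> B}" by auto
      then have "A \<in> ?G" using A(6) unfolding obs_gens_def by blast
      then show "A \<in> sets (Fa 0)" unfolding sF0 by (rule sigma_sets.Basic)
    qed
  qed (rule spF0)
  have e: "\<forall>B \<in> sets (obs_full M N X K (Suc 0)). B \<inter> {\<omega> \<in> space M. Sa 0 \<omega> = {1..K}} \<in> sets (Fa 0)"
  proof
    fix B assume B: "B \<in> sets (obs_full M N X K (Suc 0))"
    then have "B \<subseteq> space M" using sets.sets_into_space[OF B] by (simp add: obs_full_space)
    then have "B \<inter> {\<omega> \<in> space M. Sa 0 \<omega> = {1..K}} = B" by auto
    then show "B \<inter> {\<omega> \<in> space M. Sa 0 \<omega> = {1..K}} \<in> sets (Fa 0)" using e0 B by auto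
  qed
  show ?thesis unfolding Inv_def using c d e spF0 by simp
qed

lemma S_Suc_eq:
  assumes "\<forall>\<omega>. Sa n \<omega> = {1..K} \<or> Sa n \<omega> = {}"
  shows "Sa (Suc n) \<omega> = (if Wa n \<omega> \<le> \<alpha> then Sa n \<omega> else {})"
proof -
  have "finite (Sa n \<omega>)" using assms[rule_format, of \<omega>] by auto
  then show ?thesis unfolding SF_Suc_S by (simp add: onestep_const[OF _ a0])
qed

lemma InvSuc:
  assumes I: "Inv n"
  shows "Inv (Suc n)"
proof -
  define S where "S = Sa n"
  define F where "F = Fa n"
  define W where "W = Wa n"
  define S' where "S' = Sa (Suc n)"
  define F' where "F' = Fa (Suc n)"
  define all where "all = {1..K::nat}"
  have a: "\<forall>\<omega>. S \<omega> = all \<or> S \<omega> = {}" and b: "space F = space M"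
    and c: "sets F \<subseteq> sets (obs_full M N X K (Suc n))"
    and d: "\<And>s. {\<omega> \<in> space M. S \<omega> = s} \<in> sets F"
    and e: "\<And>B. B \<in> sets (obs_full M N X K (Suc n)) \<Longrightarrow> B \<inter> {\<omega> \<in> space M. S \<omega> = all} \<in> sets F"
    using I unfolding Inv_def S_def F_def all_def by auto
  have S'eq: "S' \<omega> = (if W \<omega> \<le> \<alpha> then S \<omega> else {})" for \<omega>
    unfolding S'_def W_def S_def using S_Suc_eq a unfolding S_def all_def by blast
  have a': "\<forall>\<omega>. S' \<omega> = all \<or> S' \<omega> = {}" using a S'eq by simp
  have A'sub: "S' \<omega> = all \<Longrightarrow> S \<omega> = all" for \<omega>
    using a S'eq[of \<omega>] by (cases "W \<omega> \<le> \<alpha>") auto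
  have WF[measurable]: "W \<in> borel_measurable F" unfolding W_def F_def by simp
  have Wle: "{\<omega> \<in> space M. W \<omega> \<le> \<alpha>} \<in> sets F"
  proof -
    have "{\<omega> \<in> space F. W \<omega> \<le> \<alpha>} \<in> sets F" by measurable
    then show ?thesis using b by simp
  qed
  have S'lev: "{\<omega> \<in> space M. S' \<omega> = s} \<in> sets F" for s
  proof -
    have "{\<omega> \<in> space M. S' \<omega> = s} = ({\<omega> \<in> space M. W \<omega> \<le> \<alpha>} \<inter> {\<omega> \<in> space M. S \<omega> = s})
         \<union> (if s = {} then space M - {\<omega> \<in> space M. W \<omega> \<le> \<alpha>} else {})"
      using S'eq by auto
    moreover have "space M \<in> sets F" using b sets.top by metis
    ultimately show ?thesis using Wle d[of s] by auto
  qed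
  let ?G = "sets F \<union> obs_gens M N X S' (Suc (Suc n))"
  have GPow: "?G \<subseteq> Pow (space M)"
    using obs_gens_Pow sets.space_closed[of F] b by auto
  have F'eq: "F' = sigma (space M) ?G" unfolding F'_def F_def S'_def by (rule SF_Suc_F)
  have sF': "sets F' = sigma_sets (space M) ?G" unfolding F'eq by (rule sets_measure_of[OF GPow])
  have b': "space F' = space M" unfolding F'eq by (simp add: space_measure_of_conv)
  have FF': "sets F \<subseteq> sets F'" unfolding sF' by auto
  have genF': "A \<in> obs_gens M N X S' (Suc (Suc n)) \<Longrightarrow> A \<in> sets F'" for A
    unfolding sF' by auto
  have d': "{\<omega> \<in> space M. S' \<omega> = s} \<in> sets F'" for s
    by (rule genF') (auto simp: obs_gens_def)
  have kS': "k \<in> all \<Longrightarrow> {\<omega> \<in> space M. k \<in> S' \<omega> \<and> X k t \<omega> \<in> B}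
             = {\<omega> \<in> space M. S' \<omega> = all} \<inter> (X k t -` B \<inter> space M)" for k t B
    using a' by auto
  have kS'n: "k \<notin> all \<Longrightarrow> {\<omega> \<in> space M. k \<in> S' \<omega> \<and> X k t \<omega> \<in> B} = {}" for k t B
    using a' by auto
  have c': "sets F' \<subseteq> sets (obs_full M N X K (Suc (Suc n)))"
    unfolding sF'
  proof (rule sig_sub)
    have c2: "sets F \<subseteq> sets (obs_full M N X K (Suc (Suc n)))"
      using c obs_full_mono[of "Suc n" "Suc (Suc n)"] by auto
    show "?G \<subseteq> sets (obs_full M N X K (Suc (Suc n)))"
    proof
      fix A assume "A \<in> ?G"
      then consider "A \<in> sets F" | s where "A = {\<omega> \<in> space M. S' \<omega> = s}"
        | k B where "A = {\<omega> \<in> space M. k \<in> S' \<omega> \<and> X k (Suc (Suc n)) \<omega> \<in> B}" "B \<in> sets N"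
        unfolding obs_gens_def by blast
      then show "A \<in> sets (obs_full M N X K (Suc (Suc n)))"
      proof cases
        case 1 then show ?thesis using c2 by auto
      next
        case (2 s) then show ?thesis using S'lev[of s] c2 by auto
      next
        case (3 k B)
        show ?thesis
        proof (cases "k \<in> all")
          case True
          have "X k (Suc (Suc n)) -` B \<inter> space M \<in> sets (obs_full M N X K (Suc (Suc n)))"
            by (rule Gf_in) (use True 3(2) in \<open>auto simp: all_def\<close>)
          moreover have "{\<omega> \<in> space M. S' \<omega> = all} \<in> sets (obs_full M N X K (Suc (Suc n)))"
            using S'lev c2 by auto
          ultimately show ?thesis unfolding 3(1) kS'[OF True] by (rule sets.Int[rotated])
        next
          case False then show ?thesis unfolding 3(1) kS'n[OF False] by simp
        qed
      qed
    qed
  qed (simp add: obs_full_space)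
  define A' where "A' = {\<omega> \<in> space M. S' \<omega> = all}"
  have A'F': "A' \<in> sets F'" unfolding A'_def by (rule d')
  have e': "B \<inter> A' \<in> sets F'" if B: "B \<in> sets (obs_full M N X K (Suc (Suc n)))" for B
  proof -
    have "B \<in> sigma_sets (space M) (Gf (Suc (Suc n)))" using B obs_full_sets by simp
    then show ?thesis
    proof induct
      case (Basic a)
      then obtain k s B0 where ak: "a = X k s -` B0 \<inter> space M" "1 \<le> k" "k \<le> K" "1 \<le> s"
        "s \<le> Suc (Suc n)" "B0 \<in> sets N" unfolding Gf_def by blast
      show ?case
      proof (cases "s \<le> Suc n")
        case True
        have "a \<in> sets (obs_full M N X K (Suc n))" unfolding ak(1)
          by (rule Gf_in) (use ak True in auto)
        then have "a \<inter> {\<omega> \<in> space M. S \<omega> = all} \<in> sets F'" using e FF' by blast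
        moreover have "a \<inter> A' = (a \<inter> {\<omega> \<in> space M. S \<omega> = all}) \<inter> A'"
          unfolding A'_def using A'sub by auto
        ultimately show ?thesis using A'F' by (metis sets.Int)
      next
        case False
        then have s: "s = Suc (Suc n)" using ak by simp
        have kall: "k \<in> all" using ak unfolding all_def by simp
        have "a \<inter> A' = {\<omega> \<in> space M. k \<in> S' \<omega> \<and> X k s \<omega> \<in> B0}"
          unfolding kS'[OF kall] A'_def ak(1) by auto
        also have "\<dots> \<in> sets F'" unfolding s by (rule genF') (use ak(6) in \<open>auto simp: obs_gens_def\<close>)
        finally show ?thesis .
      qed
    next
      case Empty then show ?case by simp
    next
      case (Compl a)
      have "(space M - a) \<inter> A' = A' - (a \<inter> A')" using A'F' sets.sets_into_space b' by auto
      then show ?case using Compl A'F' by (metis sets.Diff)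
    next
      case (Union a)
      have "(\<Union>i. a i) \<inter> A' = (\<Union>i. a i \<inter> A')" by auto
      moreover have "(\<Union>i. a i \<inter> A') \<in> sets F'"
        using sets.countable_UN[of "\<lambda>i. a i \<inter> A'" UNIV F'] Union by auto
      ultimately show ?case by simp
    qed
  qed
  show ?thesis unfolding Inv_def
    using a' b' c' d' e' unfolding S'_def F'_def A'_def all_def by auto
qed

lemma Inv_all: "Inv n"
  by (induct n) (auto intro: Inv0 InvSuc)

lemma subalg_F: "subalgebra M (Fa n)"
  using Inv_all[of n] obs_full_subM unfolding Inv_def subalgebra_def by blast

lemma subalg_F_obs: "subalgebra (obs_full M N X K (Suc n)) (Fa n)"
  using Inv_all[of n] obs_full_space unfolding Inv_def subalgebra_def by auto

lemma S_vals: "Sa n \<omega> = {1..K} \<or> Sa n \<omega> = {}"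
  using Inv_all[of n] unfolding Inv_def by auto

lemma S_lev: "{\<omega> \<in> space M. Sa n \<omega> = s} \<in> sets (Fa n)"
  using Inv_all[of n] unfolding Inv_def by auto

lemma W_trace:
  assumes P: "prob_space M" and tm: "tau0 \<in> measurable M (count_space UNIV)"
  shows "AE \<omega> in M. Sa n \<omega> = {1..K} \<longrightarrow> Wa n \<omega> = post_W M N X tau0 K (Suc n) \<omega>"
proof -
  have E: "{x \<in> space M. tau0 x < Suc n} \<in> sets M" using tm by measurable
  have fi: "integrable M (indicator {x \<in> space M. tau0 x < Suc n} :: 'a \<Rightarrow> real)"
    using E P by (intro finite_measure.integrable_const_bound[of M _ 1])
      (auto simp: prob_space_def indicator_def)
  have "AE \<omega> in M. \<omega> \<in> {\<omega> \<in> space M. Sa n \<omega> = {1..K}} \<longrightarrow>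
     Wa n \<omega> = real_cond_exp M (obs_full M N X K (Suc n)) (indicator {x \<in> space M. tau0 x < Suc n}) \<omega>"
    by (rule cexp_trace[OF P subalg_obs_full subalg_F_obs S_lev _ fi])
       (use Inv_all[of n] in \<open>auto simp: Inv_def\<close>)
  then show ?thesis unfolding post_W_def using AE_space by eventually_elim auto
qed

lemma S_charact:
  assumes P: "prob_space M" and tm: "tau0 \<in> measurable M (count_space UNIV)"
  shows "AE \<omega> in M. \<forall>n. Sa n \<omega> = (if \<forall>s\<in>{1..n}. post_W M N X tau0 K s \<omega> \<le> \<alpha> then {1..K} else {})"
proof -
  have "AE \<omega> in M. \<forall>n. Sa n \<omega> = {1..K} \<longrightarrow> Wa n \<omega> = post_W M N X tau0 K (Suc n) \<omega>"
    using W_trace[OF P tm] by (simp add: AE_all_countable)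
  then show ?thesis
  proof eventually_elim
    case (elim \<omega>)
    show ?case
    proof
      fix n show "Sa n \<omega> = (if \<forall>s\<in>{1..n}. post_W M N X tau0 K s \<omega> \<le> \<alpha> then {1..K} else {})"
      proof (induct n)
        case 0 then show ?case by simp
      next
        case (Suc n)
        have eq: "Sa (Suc n) \<omega> = (if Wa n \<omega> \<le> \<alpha> then Sa n \<omega> else {})"
          using S_Suc_eq S_vals by blast
        have split: "(\<forall>s\<in>{1..Suc n}. post_W M N X tau0 K s \<omega> \<le> \<alpha>) \<longleftrightarrow>
           (\<forall>s\<in>{1..n}. post_W M N X tau0 K s \<omega> \<le> \<alpha>) \<and> post_W M N X tau0 K (Suc n) \<omega> \<le> \<alpha>"
          by (auto simp: le_Suc_eq)
        show ?case
        proof (cases "\<forall>s\<in>{1..n}. post_W M N X tau0 K s \<omega> \<le> \<alpha>")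
          case True
          then have "Sa n \<omega> = {1..K}" using Suc by simp
          then have "Wa n \<omega> = post_W M N X tau0 K (Suc n) \<omega>" using elim by blast
          then show ?thesis using eq split True \<open>Sa n \<omega> = {1..K}\<close> by (simp del: proc_SF.simps)
        next
          case False
          have "Sa n \<omega> = {}" using Suc by (simp only: if_not_P[OF False])
          have nc: "\<not> (\<forall>s\<in>{1..Suc n}. post_W M N X tau0 K s \<omega> \<le> \<alpha>)" using False by auto
          have "Sa (Suc n) \<omega> = {}" using eq \<open>Sa n \<omega> = {}\<close> by (simp del: proc_SF.simps)
          then show ?thesis by (simp only: if_not_P[OF nc])
        qed
      qed
    qed
  qed
qed

lemma LFNR_ae:
  assumes P: "prob_space M" and tm: "tau0 \<in> measurable M (count_space UNIV)" and t: "1 \<le> t"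
  shows "AE \<omega> in M. proc_LFNR_next M N X (\<lambda>_. tau0) \<alpha> K t \<omega>
     = (if Sa t \<omega> \<noteq> {} then post_W M N X tau0 K t \<omega> else 0)"
proof -
  obtain n where n: "t = Suc n" using t by (cases t) auto
  interpret prob_space M by (rule P)
  interpret F: sigma_finite_subalgebra M "Fa n" using sfs_of_prob[OF P subalg_F] .
  define E where "E = {x \<in> space M. tau0 x < Suc n}"
  define A' where "A' = {\<omega> \<in> space M. Sa (Suc n) \<omega> \<noteq> {}}"
  have EM[measurable]: "E \<in> sets M" unfolding E_def using tm by measurable
  have sp: "space (Fa n) = space M" using subalg_F[of n] by (simp add: subalgebra_def)
  have WF[measurable]: "Wa n \<in> borel_measurable (Fa n)" by simp
  have A'eq: "A' = {\<omega> \<in> space (Fa n). Wa n \<omega> \<le> \<alpha>} \<inter> (space M - {\<omega> \<in> space M. Sa n \<omega> = {}})"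
    unfolding A'_def sp using S_Suc_eq[OF allI[OF S_vals]] by auto
  have A'F: "A' \<in> sets (Fa n)"
  proof -
    have "{\<omega> \<in> space (Fa n). Wa n \<omega> \<le> \<alpha>} \<in> sets (Fa n)" by measurable
    moreover have "space M - {\<omega> \<in> space M. Sa n \<omega> = {}} \<in> sets (Fa n)"
      using S_lev[of n "{}"] sets.compl_sets[of _ "Fa n"] sp by metis
    ultimately show ?thesis unfolding A'eq by auto
  qed
  have A'M: "A' \<in> sets M" using A'F subalg_F[of n] by (auto simp: subalgebra_def)
  define FNP where "FNP = proc_FNP_next M N X (\<lambda>_. tau0) \<alpha> K t"
  have FNPeq: "FNP \<omega> = indicator A' \<omega> * indicator E \<omega>" if \<omega>: "\<omega> \<in> space M" for \<omega>
  proof (cases "Sa (Suc n) \<omega> = {}")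
    case True
    then show ?thesis unfolding FNP_def proc_FNP_next_def proc_S_def A'_def
      by (simp add: n del: proc_SF.simps)
  next
    case False
    then have all: "Sa (Suc n) \<omega> = {1..K}" using S_vals by blast
    then have K: "1 \<le> K" using False by auto
    show ?thesis unfolding FNP_def proc_FNP_next_def proc_S_def A'_def E_def
      using False all K \<omega> by (simp add: n del: proc_SF.simps)
  qed
  have pm: "(\<lambda>\<omega>. indicator A' \<omega> * indicator E \<omega> :: real) \<in> borel_measurable M"
    using A'M by measurable
  have FNPm: "FNP \<in> borel_measurable M"
    using pm measurable_cong[of M FNP "\<lambda>\<omega>. indicator A' \<omega> * indicator E \<omega>"] FNPeq by simp
  have iA'F: "indicator A' \<in> borel_measurable (Fa n)" using A'F by simp
  have ipr: "integrable M (\<lambda>\<omega>. indicator A' \<omega> * indicator E \<omega> :: real)"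
    by (rule integrable_const_bound[of _ 1]) (use pm in \<open>auto simp: indicator_def\<close>)
  have e1: "AE \<omega> in M. real_cond_exp M (Fa n) FNP \<omega> = real_cond_exp M (Fa n) (\<lambda>\<omega>. indicator A' \<omega> * indicator E \<omega>) \<omega>"
    by (rule F.real_cond_exp_cong[OF _ FNPm pm]) (use FNPeq in \<open>auto intro: AE_I2\<close>)
  have e2: "AE \<omega> in M. real_cond_exp M (Fa n) (\<lambda>\<omega>. indicator A' \<omega> * indicator E \<omega>) \<omega> = indicator A' \<omega> * Wa n \<omega>"
    unfolding E_def by (rule F.real_cond_exp_mult[OF iA'F _ ipr[unfolded E_def]])
      (rule borel_measurable_indicator, use EM in \<open>simp add: E_def\<close>)
  have e3: "AE \<omega> in M. Sa n \<omega> = {1..K} \<longrightarrow> Wa n \<omega> = post_W M N X tau0 K (Suc n) \<omega>"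
    by (rule W_trace[OF P tm])
  have lf: "proc_LFNR_next M N X (\<lambda>_. tau0) \<alpha> K t = real_cond_exp M (Fa n) FNP"
    unfolding proc_LFNR_next_def FNP_def proc_F_def by (simp add: n del: proc_SF.simps)
  show ?thesis unfolding lf
    using e1 e2 e3 AE_space
  proof eventually_elim
    case (elim \<omega>)
    show ?case
    proof (cases "Sa (Suc n) \<omega> = {}")
      case True
      then have "\<omega> \<notin> A'" by (simp add: A'_def)
      then show ?thesis using elim True by (simp add: n del: proc_SF.simps)
    next
      case False
      then have "\<omega> \<in> A'" using elim by (simp add: A'_def)
      moreover have "Sa n \<omega> = {1..K}"
        using False S_Suc_eq[OF allI[OF S_vals], of n \<omega>] S_vals[of n \<omega>] by (auto split: if_splits)
      ultimately show ?thesis using elim False by (simp add: n del: proc_SF.simps)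
    qed
  qed
qed

end



lemma dens_fin:
  assumes pm: "p \<in> borel_measurable N" and p1: "(\<integral>\<^sup>+ z. ennreal (p z) \<partial>N) = 1" and B: "B \<in> sets N"
  shows "emeasure (density N (\<lambda>z. ennreal (p z))) B \<le> 1"
proof -
  have "emeasure (density N (\<lambda>z. ennreal (p z))) B = (\<integral>\<^sup>+ z. ennreal (p z) * indicator B z \<partial>N)"
    using pm B by (simp add: emeasure_density)
  also have "\<dots> \<le> (\<integral>\<^sup>+ z. ennreal (p z) \<partial>N)"
    by (intro nn_integral_mono) (auto simp: indicator_def)
  finally show ?thesis using p1 by simp
qed

lemma exists_sep:
  fixes p q :: "'b \<Rightarrow> real"
  assumes pm: "p \<in> borel_measurable N" and qm: "q \<in> borel_measurable N"
    and p1: "(\<integral>\<^sup>+ z. ennreal (p z) \<partial>N) = 1" and q1: "(\<integral>\<^sup>+ z. ennreal (q z) \<partial>N) = 1"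
    and Aq: "AE z in density N (\<lambda>z. ennreal (q z)). 0 < p z"
    and Ip: "integral\<^sup>L (density N (\<lambda>z. ennreal (p z))) (\<lambda>z. ln (p z / q z)) > 0"
    and Iq: "integral\<^sup>L (density N (\<lambda>z. ennreal (q z))) (\<lambda>z. ln (q z / p z)) > 0"
  shows "\<exists>B\<in>sets N. measure (density N (\<lambda>z. ennreal (p z))) B \<noteq> measure (density N (\<lambda>z. ennreal (q z))) B"
proof (rule ccontr)
  assume "\<not> ?thesis"
  then have eqm: "\<And>B. B \<in> sets N \<Longrightarrow> measure (density N (\<lambda>z. ennreal (p z))) B = measure (density N (\<lambda>z. ennreal (q z))) B"
    by blast
  have deq: "density N (\<lambda>z. ennreal (p z)) = density N (\<lambda>z. ennreal (q z))"
  proof (rule measure_eqI)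
    fix B assume "B \<in> sets (density N (\<lambda>z. ennreal (p z)))"
    then have B: "B \<in> sets N" by simp
    have "emeasure (density N (\<lambda>z. ennreal (p z))) B = ennreal (measure (density N (\<lambda>z. ennreal (p z))) B)"
      using dens_fin[OF pm p1 B] by (intro emeasure_eq_ennreal_measure) (auto simp: top_unique)
    also have "\<dots> = ennreal (measure (density N (\<lambda>z. ennreal (q z))) B)" using eqm[OF B] by simp
    also have "\<dots> = emeasure (density N (\<lambda>z. ennreal (q z))) B"
      using dens_fin[OF qm q1 B] by (intro emeasure_eq_ennreal_measure[symmetric]) (auto simp: top_unique)
    finally show "emeasure (density N (\<lambda>z. ennreal (p z))) B = emeasure (density N (\<lambda>z. ennreal (q z))) B" .
  qed simp
  have qpos: "AE z in density N (\<lambda>z. ennreal (q z)). 0 < q z"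
    using qm by (subst AE_density) auto
  have ae: "AE z in density N (\<lambda>z. ennreal (q z)). ln (p z / q z) = - ln (q z / p z)"
    using qpos Aq by eventually_elim (simp add: ln_div)
  have "integral\<^sup>L (density N (\<lambda>z. ennreal (q z))) (\<lambda>z. ln (p z / q z))
      = integral\<^sup>L (density N (\<lambda>z. ennreal (q z))) (\<lambda>z. - ln (q z / p z))"
    by (rule integral_cong_AE[OF _ _ ae]) (use pm qm in auto)
  also have "\<dots> < 0" using Iq by simp
  finally show False using Ip deq by simp
qed

lemma l2_int:
  assumes P: "prob_space M" and MG: "subalgebra M G" and E: "E \<in> sets M"
  shows "integrable M (\<lambda>x. (indicator E x - real_cond_exp M G (indicator E) x)\<^sup>2)"
proof -
  interpret G: sigma_finite_subalgebra M G using sfs_of_prob[OF P MG] .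
  interpret prob_space M by fact
  have fi: "integrable M (indicator E :: 'a \<Rightarrow> real)" using E
    by (intro integrable_const_bound[of _ 1]) (auto simp: indicator_def)
  have W0: "AE x in M. real_cond_exp M G (indicator E) x \<ge> 0"
    by (rule G.real_cond_exp_ge_c[OF fi]) simp
  have W1: "AE x in M. real_cond_exp M G (indicator E) x \<le> 1"
    by (rule G.real_cond_exp_le_c[OF fi]) (simp add: indicator_def)
  have b: "(a - b)\<^sup>2 \<le> 1" if "0 \<le> a" "a \<le> 1" "0 \<le> b" "b \<le> 1" for a b :: real
  proof -
    have "\<bar>a - b\<bar> \<le> 1" using that by linarith
    then have "\<bar>a - b\<bar>\<^sup>2 \<le> 1\<^sup>2" by (intro power_mono) auto
    then show ?thesis by simp
  qed
  show ?thesis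
  proof (rule integrable_const_bound[of _ 1])
    show "AE x in M. norm ((indicator E x - real_cond_exp M G (indicator E) x)\<^sup>2) \<le> 1"
      using W0 W1
    proof eventually_elim
      case (elim x)
      have "0 \<le> (indicator E x::real)" "indicator E x \<le> (1::real)" by (auto simp: indicator_def)
      then show ?case using b[of "indicator E x" "real_cond_exp M G (indicator E) x"] elim by simp
    qed
  qed (use E in simp)
qed

context
  fixes M :: "'a measure" and N :: "'b measure"
    and X :: "nat \<Rightarrow> nat \<Rightarrow> 'a \<Rightarrow> 'b" and tau0 :: "'a \<Rightarrow> nat"
    and p q :: "'b \<Rightarrow> real" and \<theta> :: real
  assumes P: "prob_space M"
    and th: "0 < \<theta>" "\<theta> < 1"
    and tm: "tau0 \<in> measurable M (count_space UNIV)"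
    and Xm: "\<And>k t. X k t \<in> measurable M N"
    and geom: "\<And>m. measure M {\<omega> \<in> space M. tau0 \<omega> = m} = \<theta> * (1 - \<theta>) ^ m"
    and cond: "\<And>m J B. finite J \<Longrightarrow> J \<subseteq> {1..} \<times> {1..} \<Longrightarrow> (\<forall>j\<in>J. B j \<in> sets N) \<Longrightarrow>
        measure M {\<omega> \<in> space M. tau0 \<omega> = m \<and> (\<forall>(k, t) \<in> J. X k t \<omega> \<in> B (k, t))}
        = measure M {\<omega> \<in> space M. tau0 \<omega> = m} *
          (\<Prod>(k, t) \<in> J. measure (density N (\<lambda>z. ennreal (if t \<le> m then p z else q z))) (B (k, t)))"
begin

abbreviation "dens b \<equiv> density N (\<lambda>z. ennreal (if b then p z else q z))"

lemma cyl_sets: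
  assumes "finite J" "\<forall>k\<in>J. Bk k \<in> sets N"
  shows "{\<omega> \<in> space M. \<forall>k\<in>J. X k t \<omega> \<in> Bk k} \<in> sets M"
  using assms
proof (induct J rule: finite_induct)
  case empty then show ?case by simp
next
  case (insert k J)
  have "{\<omega> \<in> space M. \<forall>k\<in>insert k J. X k t \<omega> \<in> Bk k} =
     {\<omega> \<in> space M. \<forall>k\<in>J. X k t \<omega> \<in> Bk k} \<inter> (X k t -` Bk k \<inter> space M)" by auto
  moreover have "X k t -` Bk k \<inter> space M \<in> sets M" using Xm insert(4) measurable_sets by auto
  ultimately show ?case using insert by auto
qed

lemma tau_sets: "{\<omega> \<in> space M. tau0 \<omega> \<in> Ms} \<in> sets M"
  using tm by measurable

lemma cond_single:
  assumes J: "finite J" "J \<subseteq> {1..}" and Bk: "\<forall>k\<in>J. Bk k \<in> sets N" and t: "1 \<le> t"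
  shows "measure M {\<omega> \<in> space M. tau0 \<omega> = m \<and> (\<forall>k\<in>J. X k t \<omega> \<in> Bk k)}
    = measure M {\<omega> \<in> space M. tau0 \<omega> = m} * (\<Prod>k\<in>J. measure (dens (t \<le> m)) (Bk k))"
proof -
  define J' where "J' = (\<lambda>k. (k, t)) ` J"
  define B where "B = (\<lambda>(k::nat, s::nat). Bk k)"
  have "finite J'" "J' \<subseteq> {1..} \<times> {1..}" "\<forall>j\<in>J'. B j \<in> sets N"
    using J Bk t by (auto simp: J'_def B_def)
  note c = cond[OF this, of m]
  have s: "{\<omega> \<in> space M. tau0 \<omega> = m \<and> (\<forall>(k, t) \<in> J'. X k t \<omega> \<in> B (k, t))}
     = {\<omega> \<in> space M. tau0 \<omega> = m \<and> (\<forall>k\<in>J. X k t \<omega> \<in> Bk k)}"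
    by (auto simp: J'_def B_def)
  have pr: "(\<Prod>(k, s) \<in> J'. measure (density N (\<lambda>z. ennreal (if s \<le> m then p z else q z))) (B (k, s)))
     = (\<Prod>k\<in>J. measure (dens (t \<le> m)) (Bk k))"
    unfolding J'_def by (subst prod.reindex) (auto simp: inj_on_def B_def)
  show ?thesis using c unfolding s pr .
qed

lemma sum_tau:
  assumes D: "D \<in> sets M"
  shows "(\<lambda>m. measure M ({\<omega> \<in> space M. tau0 \<omega> = m} \<inter> D)) sums measure M D"
proof -
  interpret prob_space M by (rule P)
  have "(\<lambda>m. measure M ({\<omega> \<in> space M. tau0 \<omega> = m} \<inter> D)) sums measure M (\<Union>m. {\<omega> \<in> space M. tau0 \<omega> = m} \<inter> D)"
    by (rule measure_UNION) (use D tm in \<open>auto simp: disjoint_family_on_def\<close>)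
  moreover have "(\<Union>m. {\<omega> \<in> space M. tau0 \<omega> = m} \<inter> D) = D"
    using sets.sets_into_space[OF D] by auto
  ultimately show ?thesis by simp
qed

lemma cond_class:
  assumes J: "finite J" "J \<subseteq> {1..}" and Bk: "\<forall>k\<in>J. Bk k \<in> sets N" and t: "1 \<le> t"
    and Ms: "\<And>m. m \<in> Ms \<Longrightarrow> (t \<le> m) = bp"
  shows "measure M ({\<omega> \<in> space M. tau0 \<omega> \<in> Ms} \<inter> {\<omega> \<in> space M. \<forall>k\<in>J. X k t \<omega> \<in> Bk k})
    = measure M {\<omega> \<in> space M. tau0 \<omega> \<in> Ms} * (\<Prod>k\<in>J. measure (dens bp) (Bk k))"
proof -
  define C where "C = {\<omega> \<in> space M. tau0 \<omega> \<in> Ms}"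
  define D where "D = {\<omega> \<in> space M. \<forall>k\<in>J. X k t \<omega> \<in> Bk k}"
  define \<pi> where "\<pi> = (\<Prod>k\<in>J. measure (dens bp) (Bk k))"
  have CM: "C \<in> sets M" unfolding C_def by (rule tau_sets)
  have DM: "D \<in> sets M" unfolding D_def by (rule cyl_sets[OF J(1) Bk])
  have trm: "measure M ({\<omega> \<in> space M. tau0 \<omega> = m} \<inter> (C \<inter> D)) = \<pi> * measure M ({\<omega> \<in> space M. tau0 \<omega> = m} \<inter> C)" for m
  proof (cases "m \<in> Ms")
    case True
    have e1: "{\<omega> \<in> space M. tau0 \<omega> = m} \<inter> (C \<inter> D) = {\<omega> \<in> space M. tau0 \<omega> = m \<and> (\<forall>k\<in>J. X k t \<omega> \<in> Bk k)}"
      using True by (auto simp: C_def D_def)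
    have e2: "{\<omega> \<in> space M. tau0 \<omega> = m} \<inter> C = {\<omega> \<in> space M. tau0 \<omega> = m}"
      using True by (auto simp: C_def)
    show ?thesis unfolding e1 e2 cond_single[OF J Bk t] \<pi>_def using Ms[OF True] by simp
  next
    case False
    then have "{\<omega> \<in> space M. tau0 \<omega> = m} \<inter> C = {}" by (auto simp: C_def)
    moreover then have "{\<omega> \<in> space M. tau0 \<omega> = m} \<inter> (C \<inter> D) = {}" by auto
    ultimately show ?thesis by simp
  qed
  have s1: "(\<lambda>m. \<pi> * measure M ({\<omega> \<in> space M. tau0 \<omega> = m} \<inter> C)) sums (\<pi> * measure M C)"
    by (rule sums_mult[OF sum_tau[OF CM]])
  have s2: "(\<lambda>m. \<pi> * measure M ({\<omega> \<in> space M. tau0 \<omega> = m} \<inter> C)) sums measure M (C \<inter> D)"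
    using sum_tau[of "C \<inter> D"] CM DM unfolding trm by auto
  show ?thesis using sums_unique2[OF s2 s1] unfolding C_def D_def \<pi>_def by simp
qed

lemma hoeff_class:
  assumes t: "1 \<le> t" and Ms: "\<And>m. m \<in> Ms \<Longrightarrow> (t \<le> m) = bp"
    and PC: "measure M {\<omega> \<in> space M. tau0 \<omega> \<in> Ms} > 0"
    and B: "B \<in> sets N" and K: "1 \<le> K" and eps: "0 \<le> \<epsilon>"
  shows "measure M ({\<omega> \<in> space M. tau0 \<omega> \<in> Ms} \<inter>
      {\<omega> \<in> space M. \<bar>(\<Sum>k\<in>{1..K}. indicator B (X k t \<omega>)) - real K * measure (dens bp) B\<bar> \<ge> \<epsilon>})
      \<le> 2 * exp (- 2 * \<epsilon>\<^sup>2 / real K)"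
proof -
  interpret prob_space M by (rule P)
  define C where "C = {\<omega> \<in> space M. tau0 \<omega> \<in> Ms}"
  define Mc where "Mc = uniform_measure M C"
  have CM: "C \<in> sets M" unfolding C_def by (rule tau_sets)
  have eC0: "emeasure M C \<noteq> 0" using PC unfolding C_def by (simp add: emeasure_eq_measure)
  have eCi: "emeasure M C \<noteq> \<infinity>" by (simp add: emeasure_eq_measure)
  interpret Mc: prob_space Mc unfolding Mc_def by (rule prob_space_uniform_measure[OF eC0 eCi])
  have sMc: "sets Mc = sets M" and spMc: "space Mc = space M" unfolding Mc_def by auto
  have probMc: "Mc.prob A = measure M (C \<inter> A) / measure M C" if "A \<in> sets M" for A
    unfolding Mc_def using measure_uniform_measure[OF eC0 eCi that] .
  have XMc: "X k t \<in> measurable Mc N" for k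
    using Xm[of k t] measurable_cong_sets[OF sMc refl, of N] by simp
  have cc: "measure M (C \<inter> {\<omega> \<in> space M. \<forall>k\<in>J. X k t \<omega> \<in> Bk k})
      = measure M C * (\<Prod>k\<in>J. measure (dens bp) (Bk k))"
    if "finite J" "J \<subseteq> {1..}" "\<forall>k\<in>J. Bk k \<in> sets N" for J Bk
    unfolding C_def by (rule cond_class[OF that t Ms])
  have PCpos: "measure M C > 0" using PC unfolding C_def .
  have pX: "Mc.prob (X k t -` A \<inter> space M) = measure (dens bp) A" if "k \<ge> 1" "A \<in> sets N" for k A
  proof -
    have "X k t -` A \<inter> space M = {\<omega> \<in> space M. \<forall>j\<in>{k}. X j t \<omega> \<in> A}" by auto
    moreover have "measure M (C \<inter> {\<omega> \<in> space M. \<forall>j\<in>{k}. X j t \<omega> \<in> A}) = measure M C * measure (dens bp) A"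
      using cc[of "{k}" "\<lambda>_. A"] that by simp
    moreover have "X k t -` A \<inter> space M \<in> sets M" using Xm that measurable_sets by blast
    ultimately show ?thesis using probMc PCpos by simp
  qed
  have indX: "Mc.indep_vars (\<lambda>_. N) (\<lambda>k. X k t) {1..K}"
    unfolding Mc.indep_vars_def2
  proof
    show "\<forall>i\<in>{1..K}. X i t \<in> measurable Mc N" using XMc by blast
    show "Mc.indep_sets (\<lambda>i. {X i t -` A \<inter> space Mc |A. A \<in> sets N}) {1..K}"
    proof (rule Mc.indep_setsI)
      fix i assume "i \<in> {1..K}"
      show "{X i t -` A \<inter> space Mc |A. A \<in> sets N} \<subseteq> Mc.events"
        using XMc measurable_sets by blast
    next
      fix A J assume J: "J \<noteq> {}" "J \<subseteq> {1..K}" "finite J"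
        and A: "\<forall>j\<in>J. A j \<in> {X j t -` A \<inter> space Mc |A. A \<in> sets N}"
      then have "\<forall>j\<in>J. \<exists>B'. A j = X j t -` B' \<inter> space M \<and> B' \<in> sets N" by (auto simp: spMc)
      then obtain Bk where Bk: "\<And>j. j \<in> J \<Longrightarrow> A j = X j t -` Bk j \<inter> space M \<and> Bk j \<in> sets N"
        by metis
      have J1: "J \<subseteq> {1..}" using J by auto
      have int: "(\<Inter>j\<in>J. A j) = {\<omega> \<in> space M. \<forall>k\<in>J. X k t \<omega> \<in> Bk k}"
        using Bk J(1) by auto
      have "Mc.prob (\<Inter>j\<in>J. A j) = (\<Prod>k\<in>J. measure (dens bp) (Bk k))"
        unfolding int using probMc[OF cyl_sets[OF J(3)]] cc[OF J(3) J1] Bk PCpos by simp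
      also have "\<dots> = (\<Prod>j\<in>J. Mc.prob (A j))"
        by (rule prod.cong[OF refl]) (use Bk pX J(2) in auto)
      finally show "Mc.prob (\<Inter>j\<in>J. A j) = (\<Prod>j\<in>J. Mc.prob (A j))" .
    qed
  qed
  define Y where "Y = (\<lambda>k \<omega>. indicator B (X k t \<omega>) :: real)"
  have indY: "Mc.indep_vars (\<lambda>_. borel) Y {1..K}"
    unfolding Y_def by (rule Mc.indep_vars_compose2[OF indX]) (use B in simp)
  have EY: "Mc.expectation (Y k) = measure (dens bp) B" if "k \<in> {1..K}" for k
  proof -
    have "Mc.expectation (Y k) = Mc.expectation (indicator (X k t -` B \<inter> space M))"
      by (rule Bochner_Integration.integral_cong) (auto simp: Y_def spMc indicator_def)
    also have "\<dots> = Mc.prob (X k t -` B \<inter> space M)" by (simp add: spMc)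
    also have "\<dots> = measure (dens bp) B" using pX[of k B] that B by simp
    finally show ?thesis .
  qed
  interpret H: Hoeffding_ineq Mc "{1..K}" Y "\<lambda>_. 0" "\<lambda>_. 1" "\<Sum>i\<in>{1..K}. Mc.expectation (Y i)"
  proof unfold_locales
    show "finite {1..K}" by simp
    show "Mc.indep_vars (\<lambda>_. borel) Y {1..K}" by (rule indY)
    show "AE x in Mc. Y i x \<in> {0..1}" for i by (auto simp: Y_def indicator_def)
  qed simp
  have mu: "(\<Sum>i\<in>{1..K}. Mc.expectation (Y i)) = real K * measure (dens bp) B"
    using EY by simp
  have pos: "(\<Sum>i\<in>{1..K}. (1 - (0::real))\<^sup>2) > 0" using K by simp
  have hb: "Mc.prob {x \<in> space Mc. \<bar>(\<Sum>i\<in>{1..K}. Y i x) - real K * measure (dens bp) B\<bar> \<ge> \<epsilon>}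
      \<le> 2 * exp (- 2 * \<epsilon>\<^sup>2 / real K)"
    using H.Hoeffding_ineq_abs_ge[OF eps pos] unfolding mu by simp
  define Ev where "Ev = {\<omega> \<in> space M. \<bar>(\<Sum>k\<in>{1..K}. indicator B (X k t \<omega>)) - real K * measure (dens bp) B\<bar> \<ge> \<epsilon>}"
  have EvM: "Ev \<in> sets M"
  proof -
    have [measurable]: "(\<lambda>\<omega>. (\<Sum>k\<in>{1..K}. indicator B (X k t \<omega>) :: real)) \<in> borel_measurable M"
      by (rule borel_measurable_sum) (use B Xm in measurable)
    show ?thesis unfolding Ev_def by measurable
  qed
  have "measure M (C \<inter> Ev) = measure M C * Mc.prob Ev"
    using probMc[OF EvM] PCpos by simp
  also have "\<dots> \<le> 1 * Mc.prob Ev" by (intro mult_right_mono) auto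
  also have "Mc.prob Ev \<le> 2 * exp (- 2 * \<epsilon>\<^sup>2 / real K)"
    using hb unfolding Ev_def Y_def spMc by simp
  finally show ?thesis unfolding C_def Ev_def by simp
qed

lemma X_obs:
  assumes "1 \<le> k" "k \<le> K" "1 \<le> t"
  shows "X k t \<in> measurable (obs_full M N X K t) N"
proof (rule measurableI)
  fix \<omega> assume "\<omega> \<in> space (obs_full M N X K t)"
  then have "\<omega> \<in> space M" by (simp add: obs_full_space[OF Xm order.refl])
  then show "X k t \<omega> \<in> space N" by (rule measurable_space[OF Xm])
next
  fix A assume "A \<in> sets N"
  then show "X k t -` A \<inter> space (obs_full M N X K t) \<in> sets (obs_full M N X K t)"
    using Gf_in[OF Xm order.refl, of k K t t A] assms by (simp add: obs_full_space[OF Xm order.refl])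
qed

lemma consistency:
  assumes t: "1 \<le> t" and B: "B \<in> sets N" and ab: "measure (dens True) B \<noteq> measure (dens False) B"
  shows "AE \<omega> in M. (\<lambda>K. post_W M N X tau0 K t \<omega>) \<longlonglongrightarrow> indicator {\<omega> \<in> space M. tau0 \<omega> < t} \<omega>"
proof -
  interpret prob_space M by (rule P)
  define a where "a = measure (dens True) B"
  define b where "b = measure (dens False) B"
  define \<delta> where "\<delta> = \<bar>a - b\<bar> / 2"
  have \<delta>: "\<delta> > 0" using ab unfolding \<delta>_def a_def b_def by simp
  define E where "E = {\<omega> \<in> space M. tau0 \<omega> < t}"
  have EM: "E \<in> sets M" unfolding E_def using tm by measurable
  define Cq where "Cq = {\<omega> \<in> space M. tau0 \<omega> \<in> {m. m < t}}"
  define Cp where "Cp = {\<omega> \<in> space M. tau0 \<omega> \<in> {m. t \<le> m}}"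
  have Cqpos: "measure M Cq > 0"
  proof -
    have "measure M {\<omega> \<in> space M. tau0 \<omega> = 0} \<le> measure M Cq"
      unfolding Cq_def using t by (intro finite_measure_mono tau_sets) auto
    moreover have "measure M {\<omega> \<in> space M. tau0 \<omega> = 0} > 0" using geom[of 0] th by simp
    ultimately show ?thesis by linarith
  qed
  have Cppos: "measure M Cp > 0"
  proof -
    have "measure M {\<omega> \<in> space M. tau0 \<omega> = t} \<le> measure M Cp"
      unfolding Cp_def using t by (intro finite_measure_mono tau_sets) auto
    moreover have "measure M {\<omega> \<in> space M. tau0 \<omega> = t} > 0" using geom[of t] th by simp
    ultimately show ?thesis by linarith
  qed
  define S where "S = (\<lambda>K \<omega>. (\<Sum>k\<in>{1..K}. indicator B (X k t \<omega>)) :: real)"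
  define Z where "Z = (\<lambda>K \<omega>. if \<bar>S K \<omega> - real K * b\<bar> < real K * \<delta> then 1 else 0 :: real)"
  define D1 where "D1 = (\<lambda>K. Cq \<inter> {\<omega> \<in> space M. \<bar>S K \<omega> - real K * b\<bar> \<ge> real K * \<delta>})"
  define D2 where "D2 = (\<lambda>K. Cp \<inter> {\<omega> \<in> space M. \<bar>S K \<omega> - real K * a\<bar> \<ge> real K * \<delta>})"
  have SM[measurable]: "S K \<in> borel_measurable M" for K
    unfolding S_def by (rule borel_measurable_sum) (use B Xm in measurable)
  have ZG: "Z K \<in> borel_measurable (obs_full M N X K t)" for K
  proof -
    have [measurable]: "S K \<in> borel_measurable (obs_full M N X K t)"
      unfolding S_def
    proof (rule borel_measurable_sum)
      fix k assume "k \<in> {1..K}"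
      then have [measurable]: "X k t \<in> measurable (obs_full M N X K t) N" using X_obs t by auto
      show "(\<lambda>\<omega>. indicator B (X k t \<omega>) :: real) \<in> borel_measurable (obs_full M N X K t)"
        using B by measurable
    qed
    show ?thesis unfolding Z_def by measurable
  qed
  have subG: "subalgebra M (obs_full M N X K t)" for K
    by (rule subalg_obs_full[where X=X and M=M and N=N and \<alpha>=0]) (use Xm in auto)
  have ZM[measurable]: "Z K \<in> borel_measurable M" for K
    using ZG subG measurable_from_subalg by blast
  have D1M: "D1 K \<in> sets M" for K unfolding D1_def Cq_def using tm by measurable
  have D2M: "D2 K \<in> sets M" for K unfolding D2_def Cp_def using tm by measurable
  have D1b: "measure M (D1 K) \<le> 2 * exp (- 2 * (real K * \<delta>)\<^sup>2 / real K)" if K: "1 \<le> K" for K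
    unfolding D1_def Cq_def S_def b_def
    by (rule hoeff_class[OF t _ _ B K]) (use Cqpos \<delta> in \<open>auto simp: Cq_def\<close>)
  have D2b: "measure M (D2 K) \<le> 2 * exp (- 2 * (real K * \<delta>)\<^sup>2 / real K)" if K: "1 \<le> K" for K
    unfolding D2_def Cp_def S_def a_def
    by (rule hoeff_class[OF t _ _ B K]) (use Cppos \<delta> in \<open>auto simp: Cp_def\<close>)
  define c where "c = (\<lambda>K::nat. 4 * exp (- 2 * \<delta>\<^sup>2) ^ K)"
  have ptw: "(indicator E \<omega> - Z K \<omega>)\<^sup>2 \<le> indicator (D1 K) \<omega> + indicator (D2 K) \<omega>"
    if \<omega>: "\<omega> \<in> space M" for K \<omega>
  proof (cases "\<omega> \<in> E")
    case True
    then have "\<omega> \<in> Cq" using \<omega> by (auto simp: E_def Cq_def)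
    then show ?thesis using True
      by (cases "\<bar>S K \<omega> - real K * b\<bar> < real K * \<delta>") (auto simp: Z_def D1_def indicator_def \<omega>)
  next
    case False
    then have "\<omega> \<in> Cp" using \<omega> by (auto simp: E_def Cp_def)
    show ?thesis
    proof (cases "\<bar>S K \<omega> - real K * b\<bar> < real K * \<delta>")
      case True
      have "\<bar>real K * a - real K * b\<bar> = real K * (2 * \<delta>)"
        unfolding \<delta>_def by (simp add: abs_mult flip: right_diff_distrib)
      then have "\<bar>S K \<omega> - real K * a\<bar> \<ge> real K * \<delta>" using True by linarith
      then show ?thesis using False \<open>\<omega> \<in> Cp\<close> \<omega> by (simp add: Z_def D2_def indicator_def)
    next
      case False
      then show ?thesis using \<open>\<omega> \<notin> E\<close> by (simp add: Z_def indicator_def)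
    qed
  qed
  have ptw1: "(indicator E \<omega> - Z K \<omega>)\<^sup>2 \<le> (1::real)" for K \<omega>
    by (auto simp: Z_def indicator_def)
  have intZ: "integrable M (\<lambda>\<omega>. (indicator E \<omega> - Z K \<omega>)\<^sup>2)" for K
    by (rule integrable_const_bound[of _ 1]) (use ptw1 EM in auto)
  have i: "integrable M (indicator A :: 'a \<Rightarrow> real)" if "A \<in> sets M" for A
    by (rule integrable_const_bound[of _ 1]) (use that in auto)
  have errZ: "(\<integral>\<omega>. (indicator E \<omega> - Z K \<omega>)\<^sup>2 \<partial>M) \<le> c K" for K
  proof (cases "K = 0")
    case True
    have "(\<integral>\<omega>. (indicator E \<omega> - Z K \<omega>)\<^sup>2 \<partial>M) \<le> (\<integral>\<omega>. 1 \<partial>M)"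
      by (rule integral_mono[OF intZ]) (use ptw1 in auto)
    also have "\<dots> = 1" by (simp add: prob_space)
    finally show ?thesis using True by (simp add: c_def)
  next
    case False
    then have K: "1 \<le> K" by simp
    have "(\<integral>\<omega>. (indicator E \<omega> - Z K \<omega>)\<^sup>2 \<partial>M) \<le> (\<integral>\<omega>. indicator (D1 K) \<omega> + indicator (D2 K) \<omega> \<partial>M)"
    proof (rule integral_mono[OF intZ])
      show "integrable M (\<lambda>\<omega>. indicator (D1 K) \<omega> + indicator (D2 K) \<omega> :: real)"
        using i[OF D1M] i[OF D2M] by auto
    qed (use ptw in auto)
    also have "\<dots> = measure M (D1 K) + measure M (D2 K)"
    proof -
      have "D1 K \<inter> space M = D1 K" "D2 K \<inter> space M = D2 K"
        using sets.sets_into_space[OF D1M] sets.sets_into_space[OF D2M] by blast+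
      then show ?thesis by (simp add: Bochner_Integration.integral_add[OF i[OF D1M] i[OF D2M]])
    qed
    also have "\<dots> \<le> 4 * exp (- 2 * (real K * \<delta>)\<^sup>2 / real K)" using D1b[OF K] D2b[OF K] by simp
    also have "- 2 * (real K * \<delta>)\<^sup>2 / real K = real K * (- 2 * \<delta>\<^sup>2)"
      using K by (simp add: power2_eq_square field_simps)
    also have "4 * exp (real K * (- 2 * \<delta>\<^sup>2)) = c K"
      unfolding c_def by (subst exp_of_nat_mult) (rule refl)
    finally show ?thesis .
  qed
  have csum: "summable c" unfolding c_def
    by (intro summable_mult summable_geometric) (use \<delta> in simp)
  show ?thesis
  proof (rule ae_conv_summable[OF P _ _ _ _ csum])
    show "indicator {\<omega> \<in> space M. tau0 \<omega> < t} \<in> borel_measurable M" using EM E_def by simp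
    show "post_W M N X tau0 K t \<in> borel_measurable M" for K unfolding post_W_def by simp
    show "integrable M (\<lambda>x. (indicator {\<omega> \<in> space M. tau0 \<omega> < t} x - post_W M N X tau0 K t x)\<^sup>2)" for K
      unfolding post_W_def using l2_int[OF P subG EM] E_def by simp
    show "(\<integral>x. (indicator {\<omega> \<in> space M. tau0 \<omega> < t} x - post_W M N X tau0 K t x)\<^sup>2 \<partial>M) \<le> c K" for K
    proof -
      have "(\<integral>x. (indicator E x - real_cond_exp M (obs_full M N X K t) (indicator E) x)\<^sup>2 \<partial>M)
          \<le> (\<integral>x. (indicator E x - Z K x)\<^sup>2 \<partial>M)"
        by (rule l2_opt[OF P subG EM ZG]) (auto simp: Z_def)
      then show ?thesis using errZ[of K] unfolding post_W_def E_def by simp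
    qed
  qed
qed

end




lemma sup_lemma:
  fixes w :: "nat \<Rightarrow> real"
  shows "(SUP t \<in> {t. 1 \<le> t \<and> (\<forall>s\<in>{1..t-1}. w s \<le> \<alpha>)}. enat t)
     = (if \<exists>t\<ge>1. w t > \<alpha> then enat (LEAST t. 1 \<le> t \<and> w t > \<alpha>) else \<infinity>)"
proof (cases "\<exists>t\<ge>1. w t > \<alpha>")
  case True
  define L where "L = (LEAST t. 1 \<le> t \<and> w t > \<alpha>)"
  have L: "1 \<le> L \<and> w L > \<alpha>" unfolding L_def using True by (metis (mono_tags, lifting) LeastI)
  have Lmin: "\<And>s. 1 \<le> s \<Longrightarrow> s < L \<Longrightarrow> w s \<le> \<alpha>" unfolding L_def
    using not_less_Least by fastforce
  have set: "{t. 1 \<le> t \<and> (\<forall>s\<in>{1..t-1}. w s \<le> \<alpha>)} = {1..L}"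
  proof (intro set_eqI iffI)
    fix t assume t: "t \<in> {t. 1 \<le> t \<and> (\<forall>s\<in>{1..t-1}. w s \<le> \<alpha>)}"
    show "t \<in> {1..L}"
    proof (rule ccontr)
      assume "t \<notin> {1..L}"
      then have "L \<in> {1..t-1}" using t L by auto
      then have "w L \<le> \<alpha>" using t by blast
      then show False using L by simp
    qed
  next
    fix t assume "t \<in> {1..L}"
    then show "t \<in> {t. 1 \<le> t \<and> (\<forall>s\<in>{1..t-1}. w s \<le> \<alpha>)}" using Lmin by auto
  qed
  have "(SUP t \<in> {1..L}. enat t) = enat L"
  proof (rule antisym)
    show "(SUP t \<in> {1..L}. enat t) \<le> enat L" by (rule SUP_least) auto
    show "enat L \<le> (SUP t \<in> {1..L}. enat t)" by (rule SUP_upper) (use L in auto)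
  qed
  then show ?thesis using True unfolding set L_def by simp
next
  case False
  then have set: "{t. 1 \<le> t \<and> (\<forall>s\<in>{1..t-1}. w s \<le> \<alpha>)} = {t. 1 \<le> t}" by (auto simp: not_less)
  have inf: "infinite (enat ` {t::nat. 1 \<le> t})"
  proof
    assume "finite (enat ` {t::nat. 1 \<le> t})"
    then have "finite {t::nat. 1 \<le> t}" using finite_imageD inj_on_def by (metis enat.inject)
    moreover have "infinite {t::nat. 1 \<le> t}" using infinite_Ici[of "1::nat"] by (simp add: atLeast_def)
    ultimately show False by simp
  qed
  have ne: "\<exists>t::nat. 1 \<le> t" by auto
  show ?thesis unfolding set using False inf ne by (simp add: Sup_enat_def)
qed

context
  fixes w :: "nat \<Rightarrow> nat \<Rightarrow> real" and m :: nat and \<alpha> :: real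
  assumes a: "0 < \<alpha>" "\<alpha> < 1"
    and lim: "\<And>s. 1 \<le> s \<Longrightarrow> (\<lambda>K. w K s) \<longlonglongrightarrow> (if m < s then 1 else 0)"
begin

lemma ev_small: "t \<le> m \<Longrightarrow> eventually (\<lambda>K. \<forall>s\<in>{1..t}. w K s \<le> \<alpha>) sequentially"
proof -
  assume t: "t \<le> m"
  have "eventually (\<lambda>K. w K s < \<alpha>) sequentially" if "s \<in> {1..t}" for s
  proof -
    have "(\<lambda>K. w K s) \<longlonglongrightarrow> 0" using lim[of s] that t by auto
    then show ?thesis using a by (intro order_tendstoD(2)) auto
  qed
  then have "eventually (\<lambda>K. \<forall>s\<in>{1..t}. w K s < \<alpha>) sequentially"
    by (intro eventually_ball_finite) auto
  then show ?thesis by eventually_elim auto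
qed

lemma ev_big: "eventually (\<lambda>K. w K (Suc m) > \<alpha>) sequentially"
proof -
  have "(\<lambda>K. w K (Suc m)) \<longlonglongrightarrow> 1" using lim[of "Suc m"] by simp
  then show ?thesis using a by (intro order_tendstoD(1)) auto
qed

lemma ev_large: "m < t \<Longrightarrow> eventually (\<lambda>K. \<not> (\<forall>s\<in>{1..t}. w K s \<le> \<alpha>)) sequentially"
proof -
  assume "m < t"
  then have mem: "Suc m \<in> {1..t}" by auto
  show ?thesis using ev_big by (rule eventually_mono) (use mem in force)
qed

lemma ev_stop: "eventually (\<lambda>K. (\<exists>t\<ge>1. w K t > \<alpha>) \<and> (LEAST t. 1 \<le> t \<and> w K t > \<alpha>) = Suc m) sequentially"
  using ev_small[OF order.refl] ev_big
proof eventually_elim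
  case (elim K)
  have "(LEAST t. 1 \<le> t \<and> w K t > \<alpha>) = Suc m"
  proof (rule Least_equality)
    show "1 \<le> Suc m \<and> w K (Suc m) > \<alpha>" using elim by simp
    fix y assume "1 \<le> y \<and> w K y > \<alpha>"
    then show "Suc m \<le> y" using elim by (meson atLeastAtMost_iff not_less not_less_eq_eq)
  qed
  then show ?case using elim by auto
qed

end


theorem theorem3:
  fixes M :: "'a measure" and N :: "'b measure"
    and X :: "nat \<Rightarrow> nat \<Rightarrow> 'a \<Rightarrow> 'b" and tau0 :: "'a \<Rightarrow> nat"
    and p q :: "'b \<Rightarrow> real" and \<theta> \<alpha> :: real
  assumes "prob_space M"
    and "0 < \<alpha>" "\<alpha> < 1" and "0 < \<theta>" "\<theta> < 1"
    and "tau0 \<in> measurable M (count_space UNIV)"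
    and "\<And>k t. X k t \<in> measurable M N"
    and "p \<in> borel_measurable N" "q \<in> borel_measurable N"
    and "\<And>z. z \<in> space N \<Longrightarrow> 0 \<le> p z" "\<And>z. z \<in> space N \<Longrightarrow> 0 \<le> q z"
    and "(\<integral>\<^sup>+ z. ennreal (p z) \<partial>N) = 1" "(\<integral>\<^sup>+ z. ennreal (q z) \<partial>N) = 1"
    and geom: "\<And>m. measure M {\<omega> \<in> space M. tau0 \<omega> = m} = \<theta> * (1 - \<theta>) ^ m"
    and cond: "\<And>m J B. finite J \<Longrightarrow> J \<subseteq> {1..} \<times> {1..} \<Longrightarrow> (\<forall>j\<in>J. B j \<in> sets N) \<Longrightarrow>
        measure M {\<omega> \<in> space M. tau0 \<omega> = m \<and> (\<forall>(k, t) \<in> J. X k t \<omega> \<in> B (k, t))}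
        = measure M {\<omega> \<in> space M. tau0 \<omega> = m} *
          (\<Prod>(k, t) \<in> J. measure (density N (\<lambda>z. ennreal (if t \<le> m then p z else q z))) (B (k, t)))"
    and A2: "AE z in density N (\<lambda>z. ennreal (p z)). 0 < q z"
            "AE z in density N (\<lambda>z. ennreal (q z)). 0 < p z"
            "integral\<^sup>L (density N (\<lambda>z. ennreal (p z))) (\<lambda>z. ln (p z / q z)) > 0"
            "integral\<^sup>L (density N (\<lambda>z. ennreal (q z))) (\<lambda>z. ln (q z / p z)) > 0"
            "integrable (density N (\<lambda>z. ennreal (p z))) (\<lambda>z. (ln (p z / q z))\<^sup>2)"
            "integrable (density N (\<lambda>z. ennreal (q z))) (\<lambda>z. (ln (q z / p z))\<^sup>2)"
  shows "(\<forall>K. AE \<omega> in M. \<forall>k \<in> {1..K}.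
             proc_T M N X (\<lambda>_. tau0) \<alpha> K k \<omega> = stop_T M N X tau0 \<alpha> K \<omega>)
       \<and> (AE \<omega> in M. ((\<lambda>K. ereal_of_enat (stop_T M N X tau0 \<alpha> K \<omega>) - ereal (real (tau0 \<omega>)))
             \<longlonglongrightarrow> 1))
       \<and> (\<forall>t \<ge> 1. AE \<omega> in M. ((\<lambda>K. proc_LFNR_next M N X (\<lambda>_. tau0) \<alpha> K t \<omega>) \<longlonglongrightarrow> 0))
       \<and> (\<forall>t \<ge> 1. AE \<omega> in M.
             ((\<lambda>K. real (card (proc_S M N X (\<lambda>_. tau0) \<alpha> K (t + 1) \<omega>)) / real K)
               \<longlonglongrightarrow> (if t \<le> tau0 \<omega> then 1 else 0)))"
proof -
  note P = assms(1)
  have a0: "0 \<le> \<alpha>" using assms(2) by simp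
  have tm: "tau0 \<in> measurable M (count_space UNIV)" by (rule assms(6))
  have Xm: "\<And>k t. X k t \<in> measurable M N" by (rule assms(7))
  interpret prob_space M by (rule P)
  obtain B where B: "B \<in> sets N"
    and Bne: "measure (density N (\<lambda>z. ennreal (p z))) B \<noteq> measure (density N (\<lambda>z. ennreal (q z))) B"
    using exists_sep[OF assms(8) assms(9) assms(12) assms(13) A2(2) A2(3) A2(4)] by blast
  have Bne': "measure (density N (\<lambda>z. ennreal (if True then p z else q z))) B
      \<noteq> measure (density N (\<lambda>z. ennreal (if False then p z else q z))) B" using Bne by simp
  have cons1: "AE \<omega> in M. (\<lambda>K. post_W M N X tau0 K t \<omega>) \<longlonglongrightarrow> indicator {\<omega> \<in> space M. tau0 \<omega> < t} \<omega>"
    if "1 \<le> t" for t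
    by (rule consistency[OF P assms(4) assms(5) tm Xm geom cond that B Bne'])
  have "AE \<omega> in M. \<forall>t. 1 \<le> t \<longrightarrow> (\<lambda>K. post_W M N X tau0 K t \<omega>) \<longlonglongrightarrow> indicator {\<omega> \<in> space M. tau0 \<omega> < t} \<omega>"
    unfolding AE_all_countable
  proof
    fix t show "AE \<omega> in M. 1 \<le> t \<longrightarrow> (\<lambda>K. post_W M N X tau0 K t \<omega>) \<longlonglongrightarrow> indicator {\<omega> \<in> space M. tau0 \<omega> < t} \<omega>"
      by (cases "1 \<le> t") (use cons1[of t] in auto)
  qed
  then have cons: "AE \<omega> in M. \<forall>s. 1 \<le> s \<longrightarrow> (\<lambda>K. post_W M N X tau0 K s \<omega>) \<longlonglongrightarrow> (if tau0 \<omega> < s then 1 else 0)"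
    using AE_space
  proof eventually_elim
    case (elim \<omega>)
    show ?case
    proof (intro allI impI)
      fix s :: nat assume s: "1 \<le> s"
      then have "(\<lambda>K. post_W M N X tau0 K s \<omega>) \<longlonglongrightarrow> indicator {\<omega> \<in> space M. tau0 \<omega> < s} \<omega>"
        using elim(1) by blast
      moreover have "indicator {\<omega> \<in> space M. tau0 \<omega> < s} \<omega> = (if tau0 \<omega> < s then 1 else 0 :: real)"
        using elim(2) by (simp add: indicator_def)
      ultimately show "(\<lambda>K. post_W M N X tau0 K s \<omega>) \<longlonglongrightarrow> (if tau0 \<omega> < s then 1 else 0)" by simp
    qed
  qed
  have ch1: "AE \<omega> in M. \<forall>n. fst (proc_SF M N X (\<lambda>_. tau0) \<alpha> K n) \<omega> =
      (if \<forall>s\<in>{1..n}. post_W M N X tau0 K s \<omega> \<le> \<alpha> then {1..K} else {})" for K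
    by (rule S_charact[where M=M and N=N and X=X and \<alpha>=\<alpha> and K=K, OF Xm a0 P tm])
  have ch: "AE \<omega> in M. \<forall>K n. fst (proc_SF M N X (\<lambda>_. tau0) \<alpha> K n) \<omega> =
      (if \<forall>s\<in>{1..n}. post_W M N X tau0 K s \<omega> \<le> \<alpha> then {1..K} else {})"
    using ch1 by (simp add: AE_all_countable del: proc_SF.simps)
  have pS: "proc_S M N X (\<lambda>_. tau0) \<alpha> K t = fst (proc_SF M N X (\<lambda>_. tau0) \<alpha> K (t - 1))" for K t
    by (simp add: proc_S_def del: proc_SF.simps)
  have part1: "\<forall>K. AE \<omega> in M. \<forall>k \<in> {1..K}.
             proc_T M N X (\<lambda>_. tau0) \<alpha> K k \<omega> = stop_T M N X tau0 \<alpha> K \<omega>"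
  proof
    fix K
    show "AE \<omega> in M. \<forall>k \<in> {1..K}. proc_T M N X (\<lambda>_. tau0) \<alpha> K k \<omega> = stop_T M N X tau0 \<alpha> K \<omega>"
      using ch1[of K]
    proof eventually_elim
      case (elim \<omega>)
      show ?case
      proof
        fix k assume k: "k \<in> {1..K}"
        have set: "{t. 1 \<le> t \<and> k \<in> proc_S M N X (\<lambda>_. tau0) \<alpha> K t \<omega>}
           = {t. 1 \<le> t \<and> (\<forall>s\<in>{1..t-1}. post_W M N X tau0 K s \<omega> \<le> \<alpha>)}"
          using elim k unfolding pS by (auto simp del: proc_SF.simps)
        show "proc_T M N X (\<lambda>_. tau0) \<alpha> K k \<omega> = stop_T M N X tau0 \<alpha> K \<omega>"
          unfolding proc_T_def stop_T_def set by (rule sup_lemma)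
      qed
    qed
  qed
  have part2: "AE \<omega> in M. ((\<lambda>K. ereal_of_enat (stop_T M N X tau0 \<alpha> K \<omega>) - ereal (real (tau0 \<omega>))) \<longlonglongrightarrow> 1)"
    using cons
  proof eventually_elim
    case (elim \<omega>)
    have "eventually (\<lambda>K. (\<exists>t\<ge>1. post_W M N X tau0 K t \<omega> > \<alpha>) \<and>
        (LEAST t. 1 \<le> t \<and> post_W M N X tau0 K t \<omega> > \<alpha>) = Suc (tau0 \<omega>)) sequentially"
      by (rule ev_stop[where w="\<lambda>K s. post_W M N X tau0 K s \<omega>" and m="tau0 \<omega>"]) (use assms(2,3) elim in auto)
    then have "eventually (\<lambda>K. ereal_of_enat (stop_T M N X tau0 \<alpha> K \<omega>) - ereal (real (tau0 \<omega>)) = 1) sequentially"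
      by eventually_elim (simp add: stop_T_def)
    then show ?case by (rule tendsto_eventually)
  qed
  have part3: "\<forall>t \<ge> 1. AE \<omega> in M. ((\<lambda>K. proc_LFNR_next M N X (\<lambda>_. tau0) \<alpha> K t \<omega>) \<longlonglongrightarrow> 0)"
  proof (intro allI impI)
    fix t :: nat assume t: "1 \<le> t"
    have lf1: "AE \<omega> in M. proc_LFNR_next M N X (\<lambda>_. tau0) \<alpha> K t \<omega>
        = (if fst (proc_SF M N X (\<lambda>_. tau0) \<alpha> K t) \<omega> \<noteq> {} then post_W M N X tau0 K t \<omega> else 0)" for K
      by (rule LFNR_ae[where M=M and N=N and X=X and \<alpha>=\<alpha> and K=K, OF Xm a0 P tm t])
    have lf: "AE \<omega> in M. \<forall>K. proc_LFNR_next M N X (\<lambda>_. tau0) \<alpha> K t \<omega>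
        = (if fst (proc_SF M N X (\<lambda>_. tau0) \<alpha> K t) \<omega> \<noteq> {} then post_W M N X tau0 K t \<omega> else 0)"
      using lf1 by (simp add: AE_all_countable del: proc_SF.simps)
    show "AE \<omega> in M. ((\<lambda>K. proc_LFNR_next M N X (\<lambda>_. tau0) \<alpha> K t \<omega>) \<longlonglongrightarrow> 0)"
      using lf ch cons
    proof eventually_elim
      case (elim \<omega>)
      have lim: "\<And>s. 1 \<le> s \<Longrightarrow> (\<lambda>K. post_W M N X tau0 K s \<omega>) \<longlonglongrightarrow> (if tau0 \<omega> < s then 1 else 0)"
        using elim by blast
      show ?case
      proof (cases "t \<le> tau0 \<omega>")
        case True
        have l0: "(\<lambda>K. post_W M N X tau0 K t \<omega>) \<longlonglongrightarrow> 0" using lim[OF t] True by simp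
        show ?thesis
        proof (rule Lim_null_comparison)
          show "eventually (\<lambda>K. norm (proc_LFNR_next M N X (\<lambda>_. tau0) \<alpha> K t \<omega>) \<le> \<bar>post_W M N X tau0 K t \<omega>\<bar>) sequentially"
            using elim by (intro always_eventually) (auto simp del: proc_SF.simps)
          show "(\<lambda>K. \<bar>post_W M N X tau0 K t \<omega>\<bar>) \<longlonglongrightarrow> 0" using tendsto_rabs_zero[OF l0] .
        qed
      next
        case False
        have "eventually (\<lambda>K. \<not> (\<forall>s\<in>{1..t}. post_W M N X tau0 K s \<omega> \<le> \<alpha>)) sequentially"
          by (rule ev_large[where w="\<lambda>K s. post_W M N X tau0 K s \<omega>" and m="tau0 \<omega>"]) (use assms(2,3) lim False in auto)
        then have "eventually (\<lambda>K. proc_LFNR_next M N X (\<lambda>_. tau0) \<alpha> K t \<omega> = 0) sequentially"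
          by eventually_elim (use elim in \<open>auto simp del: proc_SF.simps\<close>)
        then show ?thesis by (rule tendsto_eventually)
      qed
    qed
  qed
  have part4: "\<forall>t \<ge> 1. AE \<omega> in M.
             ((\<lambda>K. real (card (proc_S M N X (\<lambda>_. tau0) \<alpha> K (t + 1) \<omega>)) / real K)
               \<longlonglongrightarrow> (if t \<le> tau0 \<omega> then 1 else 0))"
  proof (intro allI impI)
    fix t :: nat assume t: "1 \<le> t"
    show "AE \<omega> in M. ((\<lambda>K. real (card (proc_S M N X (\<lambda>_. tau0) \<alpha> K (t + 1) \<omega>)) / real K)
               \<longlonglongrightarrow> (if t \<le> tau0 \<omega> then 1 else 0))"
      using ch cons
    proof eventually_elim
      case (elim \<omega>)
      have lim: "\<And>s. 1 \<le> s \<Longrightarrow> (\<lambda>K. post_W M N X tau0 K s \<omega>) \<longlonglongrightarrow> (if tau0 \<omega> < s then 1 else 0)"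
        using elim by blast
      have eqS: "proc_S M N X (\<lambda>_. tau0) \<alpha> K (Suc t) \<omega>
          = (if \<forall>s\<in>{1..t}. post_W M N X tau0 K s \<omega> \<le> \<alpha> then {1..K} else {})" for K
        using elim unfolding pS by (simp del: proc_SF.simps)
      show ?case
      proof (cases "t \<le> tau0 \<omega>")
        case True
        have "eventually (\<lambda>K. \<forall>s\<in>{1..t}. post_W M N X tau0 K s \<omega> \<le> \<alpha>) sequentially"
          by (rule ev_small[where w="\<lambda>K s. post_W M N X tau0 K s \<omega>" and m="tau0 \<omega>"]) (use assms(2,3) lim True in auto)
        then have "eventually (\<lambda>K. real (card (proc_S M N X (\<lambda>_. tau0) \<alpha> K (t + 1) \<omega>)) / real K = 1) sequentially"
          using eventually_ge_at_top[of "1::nat"] by eventually_elim (simp add: eqS)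
        then show ?thesis using True by (simp add: tendsto_eventually)
      next
        case False
        have "eventually (\<lambda>K. \<not> (\<forall>s\<in>{1..t}. post_W M N X tau0 K s \<omega> \<le> \<alpha>)) sequentially"
          by (rule ev_large[where w="\<lambda>K s. post_W M N X tau0 K s \<omega>" and m="tau0 \<omega>"]) (use assms(2,3) lim False in auto)
        then have "eventually (\<lambda>K. real (card (proc_S M N X (\<lambda>_. tau0) \<alpha> K (t + 1) \<omega>)) / real K = 0) sequentially"
        proof eventually_elim
          case (elim K)
          then show ?case by (simp only: Suc_eq_plus1[symmetric] eqS if_not_P[OF elim]) simp
        qed
        then show ?thesis using False by (simp add: tendsto_eventually)
      qed
    qed
  qed
  show ?thesis using part1 part2 part3 part4 by blast
qed


end
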